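(* Let $\mathcal M=(G,In,Out,Leak)$, $G=(V,E)$, be a strongly connected linear compartmental model with $|In|=|Out|=1$. Let $n$ be the number of compartments and $L$ the length of a shortest directed path in $G$ from the input compartment to the output compartment. If one of the following holds: (1) $Leak\ne\emptyset$, $In=Out$, and $|E|+|Leak|>2n-1$; (2) $Leak\ne\emptyset$, $In\ne Out$, and $|E|+|Leak|>2n-L$; (3) $Leak=\emptyset$, $In=Out$, and $|E|>2n-2$; or (4) $Leak=\emptyset$, $In\ne Out$, and $|E|>2n-L-1$, then $\mathcal M$ is unidentifiable.
   Context: A linear compartmental model $\mathcal M=(G,In,Out,Leak)$ consists of a finite directed graph $G=(V,E)$ without multi-edges, compartments $V=\{1,\dots,n\}$, and subsets $In,Out,Leak\subseteq V$; edge $k\to \ell$ carries parameter $a_{\ell k}$ and each $\ell\in Leak$ carries $a_{0\ell}$. The compartmental matrix $A$ has $A_{\ell\ell}=-\sum_{k:\,\ell\to k\in E}a_{k\ell}$ (minus $a_{0\ell}$ if $\ell\in Leak$), $A_{\ell k}=a_{\ell k}$ if $k\to\ell\in E$, $0$ otherwise. With $B^{p,q}$ denoting removal of row $p$ and column $q$ and $\partial I$ the diagonal matrix of $d/dt$'s, the input-output equations are $\det(\partial I-A)y_i=\sum_{j\in In}(-1)^{i+j}\det((\partial I-A)^{j,i})u_j$ ($i\in Out$). The coefficient map $c:\mathbb R^{|E|+|Leak|}\to\mathbb R^m$ sends the parameters to all non-constant coefficients (polynomials in the parameters) of these equations. The model is unidentifiable if $c$ is generically infinite-to-one. *)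

theory Defs
  imports "HOL-Library.FuncSet" "HOL-Computational_Algebra.Polynomial"
    "Jordan_Normal_Form.Determinant"
begin

text \<open>Linear compartmental models (G, In, Out, Leak), G = (V, E), with compartments
  V = {1..n}.  An edge k \<rightarrow> l is the pair (k, l) in E.\<close>

definition compartmental_model ::
  "nat \<Rightarrow> (nat \<times> nat) set \<Rightarrow> nat set \<Rightarrow> nat set \<Rightarrow> nat set \<Rightarrow> bool" where
  "compartmental_model n E Inp Outp Lk \<longleftrightarrow>
     E \<subseteq> {1..n} \<times> {1..n} \<and> (\<forall>k. (k, k) \<notin> E) \<and>
     Inp \<subseteq> {1..n} \<and> Outp \<subseteq> {1..n} \<and> Lk \<subseteq> {1..n}"

definition strongly_connected :: "nat \<Rightarrow> (nat \<times> nat) set \<Rightarrow> bool" where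
  "strongly_connected n E \<longleftrightarrow> (\<forall>u\<in>{1..n}. \<forall>v\<in>{1..n}. (u, v) \<in> E\<^sup>*)"

definition shortest_path_length :: "(nat \<times> nat) set \<Rightarrow> nat \<Rightarrow> nat \<Rightarrow> nat" where
  "shortest_path_length E u v = (LEAST k. (u, v) \<in> E ^^ k)"

text \<open>Parameters: EdgeP k l is a_{lk} (for the edge k \<rightarrow> l), LeakP l is a_{0l}.\<close>
datatype param = EdgeP nat nat | LeakP nat

definition param_labels :: "(nat \<times> nat) set \<Rightarrow> nat set \<Rightarrow> param set" where
  "param_labels E Lk = (\<lambda>(k, l). EdgeP k l) ` E \<union> LeakP ` Lk"

text \<open>Parameter space R^{|E|+|Leak|}: real vectors indexed by the parameter labels.\<close>
definition param_space :: "(nat \<times> nat) set \<Rightarrow> nat set \<Rightarrow> (param \<Rightarrow> real) set" where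
  "param_space E Lk = param_labels E Lk \<rightarrow>\<^sub>E (UNIV :: real set)"

text \<open>Compartmental matrix A (row/column l of the paper is index l - 1).\<close>
definition comp_matrix ::
  "nat \<Rightarrow> (nat \<times> nat) set \<Rightarrow> nat set \<Rightarrow> (param \<Rightarrow> real) \<Rightarrow> real mat" where
  "comp_matrix n E Lk \<theta> = mat n n (\<lambda>(r, c).
     let l = r + 1; k = c + 1 in
     if l = k then - (\<Sum>m\<in>{m. (l, m) \<in> E}. \<theta> (EdgeP l m))
                   - (if l \<in> Lk then \<theta> (LeakP l) else 0)
     else if (k, l) \<in> E then \<theta> (EdgeP k l) else 0)"

text \<open>The matrix \<partial>I - A, with \<partial> rendered as the polynomial variable.\<close>
definition dI_minus_A ::
  "nat \<Rightarrow> (nat \<times> nat) set \<Rightarrow> nat set \<Rightarrow> (param \<Rightarrow> real) \<Rightarrow> real poly mat" where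
  "dI_minus_A n E Lk \<theta> = mat n n (\<lambda>(r, c).
     (if r = c then [:0, 1:] else 0) - [: comp_matrix n E Lk \<theta> $$ (r, c) :])"

text \<open>Coefficients of the input-output equations, indexed by (i, None, k) for the
  coefficient of d^k y_i on the left-hand side of the equation for output i, and
  (i, Some j, k) for the coefficient of d^k u_j on its right-hand side.\<close>
definition io_coeff ::
  "nat \<Rightarrow> (nat \<times> nat) set \<Rightarrow> nat set \<Rightarrow> nat \<times> nat option \<times> nat \<Rightarrow> (param \<Rightarrow> real) \<Rightarrow> real" where
  "io_coeff n E Lk idx \<theta> = (case idx of
      (i, None, k) \<Rightarrow> coeff (det (dI_minus_A n E Lk \<theta>)) k
    | (i, Some j, k) \<Rightarrow>
        coeff ((-1) ^ (i + j) * det (mat_delete (dI_minus_A n E Lk \<theta>) (j - 1) (i - 1))) k)"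

definition io_coeff_indices :: "nat \<Rightarrow> nat set \<Rightarrow> nat set \<Rightarrow> (nat \<times> nat option \<times> nat) set" where
  "io_coeff_indices n Inp Outp = Outp \<times> (insert None (Some ` Inp)) \<times> {0..n}"

definition nonconst_indices ::
  "nat \<Rightarrow> (nat \<times> nat) set \<Rightarrow> nat set \<Rightarrow> nat set \<Rightarrow> nat set \<Rightarrow> (nat \<times> nat option \<times> nat) set" where
  "nonconst_indices n E Inp Outp Lk = {idx \<in> io_coeff_indices n Inp Outp.
      \<exists>\<theta>\<in>param_space E Lk. \<exists>\<theta>'\<in>param_space E Lk. io_coeff n E Lk idx \<theta> \<noteq> io_coeff n E Lk idx \<theta>'}"

definition coeff_map ::
  "nat \<Rightarrow> (nat \<times> nat) set \<Rightarrow> nat set \<Rightarrow> nat set \<Rightarrow> nat set \<Rightarrow> (param \<Rightarrow> real)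
     \<Rightarrow> (nat \<times> nat option \<times> nat \<Rightarrow> real)" where
  "coeff_map n E Inp Outp Lk \<theta> =
     restrict (\<lambda>idx. io_coeff n E Lk idx \<theta>) (nonconst_indices n E Inp Outp Lk)"

inductive poly_fun :: "param set \<Rightarrow> ((param \<Rightarrow> real) \<Rightarrow> real) \<Rightarrow> bool" for P where
  pf_const: "poly_fun P (\<lambda>\<theta>. c)"
| pf_var: "x \<in> P \<Longrightarrow> poly_fun P (\<lambda>\<theta>. \<theta> x)"
| pf_add: "poly_fun P f \<Longrightarrow> poly_fun P g \<Longrightarrow> poly_fun P (\<lambda>\<theta>. f \<theta> + g \<theta>)"
| pf_mult: "poly_fun P f \<Longrightarrow> poly_fun P g \<Longrightarrow> poly_fun P (\<lambda>\<theta>. f \<theta> * g \<theta>)"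

definition generically ::
  "(nat \<times> nat) set \<Rightarrow> nat set \<Rightarrow> ((param \<Rightarrow> real) \<Rightarrow> bool) \<Rightarrow> bool" where
  "generically E Lk Q \<longleftrightarrow> (\<exists>f. poly_fun (param_labels E Lk) f \<and>
      (\<exists>\<theta>\<in>param_space E Lk. f \<theta> \<noteq> 0) \<and>
      (\<forall>\<theta>\<in>param_space E Lk. f \<theta> \<noteq> 0 \<longrightarrow> Q \<theta>))"

definition unidentifiable ::
  "nat \<Rightarrow> (nat \<times> nat) set \<Rightarrow> nat set \<Rightarrow> nat set \<Rightarrow> nat set \<Rightarrow> bool" where
  "unidentifiable n E Inp Outp Lk \<longleftrightarrow> generically E Lk (\<lambda>\<theta>.
     infinite {\<theta>' \<in> param_space E Lk.
        coeff_map n E Inp Outp Lk \<theta>' = coeff_map n E Inp Outp Lk \<theta>})"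

end

theory Submission
  imports Defs "Jordan_Normal_Form.Char_Poly"
begin
section \<open>Polynomial functions\<close>

lemma poly_fun_sum:
  "finite S \<Longrightarrow> (\<And>s. s \<in> S \<Longrightarrow> poly_fun P (f s)) \<Longrightarrow> poly_fun P (\<lambda>\<theta>. \<Sum>s\<in>S. f s \<theta>)"
  by (induction S rule: finite_induct) (auto intro: poly_fun.intros)

lemma poly_fun_prod:
  "finite S \<Longrightarrow> (\<And>s. s \<in> S \<Longrightarrow> poly_fun P (f s)) \<Longrightarrow> poly_fun P (\<lambda>\<theta>. \<Prod>s\<in>S. f s \<theta>)"
  by (induction S rule: finite_induct) (auto intro: poly_fun.intros)

lemma poly_fun_neg: "poly_fun P f \<Longrightarrow> poly_fun P (\<lambda>\<theta>. - f \<theta>)"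
  using pf_mult[OF pf_const[of P "-1"], of f] by simp

lemma poly_fun_diff: "poly_fun P f \<Longrightarrow> poly_fun P g \<Longrightarrow> poly_fun P (\<lambda>\<theta>. f \<theta> - g \<theta>)"
  using pf_add[OF _ poly_fun_neg, of P f g] by simp

lemma poly_fun_cmult: "poly_fun P f \<Longrightarrow> poly_fun P (\<lambda>\<theta>. c * f \<theta>)"
  using pf_mult[OF pf_const[of P c], of f] by simp

lemma poly_fun_det:
  assumes "\<And>i j. i < n \<Longrightarrow> j < n \<Longrightarrow> poly_fun P (\<lambda>\<theta>. M \<theta> $$ (i, j))"
    and "\<And>\<theta>. M \<theta> \<in> carrier_mat n n"
  shows "poly_fun P (\<lambda>\<theta>. det (M \<theta>))"
proof -
  have "poly_fun P (\<lambda>\<theta>. \<Sum>p\<in>{p. p permutes {0..<n}}. signof p * (\<Prod>i = 0..<n. M \<theta> $$ (i, p i)))"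
    by (intro poly_fun_sum poly_fun_cmult poly_fun_prod assms)
       (auto simp: finite_permutations permutes_in_image)
  then show ?thesis using det_def'[OF assms(2)] by simp
qed

section \<open>Polynomial expressions\<close>

datatype pexp = Cst real | Vr param | Ad pexp pexp | Ml pexp pexp

fun ev :: "pexp \<Rightarrow> (param \<Rightarrow> real) \<Rightarrow> real" where
  "ev (Cst c) x = c"
| "ev (Vr p) x = x p"
| "ev (Ad a b) x = ev a x + ev b x"
| "ev (Ml a b) x = ev a x * ev b x"

fun vars :: "pexp \<Rightarrow> param set" where
  "vars (Cst c) = {}"
| "vars (Vr p) = {p}"
| "vars (Ad a b) = vars a \<union> vars b"
| "vars (Ml a b) = vars a \<union> vars b"

fun dv :: "param \<Rightarrow> pexp \<Rightarrow> pexp" where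
  "dv p (Cst c) = Cst 0"
| "dv p (Vr q) = Cst (if p = q then 1 else 0)"
| "dv p (Ad a b) = Ad (dv p a) (dv p b)"
| "dv p (Ml a b) = Ad (Ml (dv p a) b) (Ml a (dv p b))"

lemma vars_dv: "vars (dv p e) \<subseteq> vars e"
  by (induction e) auto

lemma poly_fun_ex: "poly_fun P f \<Longrightarrow> \<exists>e. vars e \<subseteq> P \<and> f = ev e"
proof (induction rule: poly_fun.induct)
  case (pf_const c)
  then show ?case by (intro exI[of _ "Cst c"]) auto
next
  case (pf_var x)
  then show ?case by (intro exI[of _ "Vr x"]) auto
next
  case (pf_add f g)
  then obtain a b where "vars a \<subseteq> P" "f = ev a" "vars b \<subseteq> P" "g = ev b" by blast
  then show ?case by (intro exI[of _ "Ad a b"]) auto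
next
  case (pf_mult f g)
  then obtain a b where "vars a \<subseteq> P" "f = ev a" "vars b \<subseteq> P" "g = ev b" by blast
  then show ?case by (intro exI[of _ "Ml a b"]) auto
qed

lemma ev_poly_fun: "vars e \<subseteq> P \<Longrightarrow> poly_fun P (ev e)"
proof (induction e)
  case (Cst x)
  then show ?case using pf_const[of P x] by simp
next
  case (Vr x)
  then show ?case using pf_var[of x P] by simp
next
  case (Ad e1 e2)
  then show ?case using pf_add[of P "ev e1" "ev e2"] by simp
next
  case (Ml e1 e2)
  then show ?case using pf_mult[of P "ev e1" "ev e2"] by simp
qed

section \<open>Taylor estimates\<close>

definition dst :: "param set \<Rightarrow> (param \<Rightarrow> real) \<Rightarrow> (param \<Rightarrow> real) \<Rightarrow> real" where
  "dst P u v = (\<Sum>p\<in>P. \<bar>u p - v p\<bar>)"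

definition Dv :: "param set \<Rightarrow> pexp \<Rightarrow> (param \<Rightarrow> real) \<Rightarrow> (param \<Rightarrow> real) \<Rightarrow> real" where
  "Dv P e u w = (\<Sum>p\<in>P. ev (dv p e) u * w p)"

lemma dst_nonneg: "dst P u v \<ge> 0"
  unfolding dst_def by (auto intro: sum_nonneg)

lemma dst_sym: "dst P u v = dst P v u"
  unfolding dst_def by (auto intro: sum.cong simp: abs_minus_commute)

lemma dst_triangle: "dst P u w \<le> dst P u v + dst P v w"
  unfolding dst_def sum.distrib[symmetric] by (rule sum_mono) auto

lemma dst_coord: "finite P \<Longrightarrow> p \<in> P \<Longrightarrow> \<bar>u p - v p\<bar> \<le> dst P u v"
  unfolding dst_def by (rule member_le_sum) auto

lemma taylor:
  assumes P: "finite P" and ve: "vars e \<subseteq> P"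
  shows "\<exists>K\<ge>0. \<forall>u v. dst P u \<theta> \<le> 1 \<longrightarrow> dst P v \<theta> \<le> 1 \<longrightarrow>
      \<bar>ev e v\<bar> \<le> K \<and> \<bar>ev e v - ev e u\<bar> \<le> K * dst P v u \<and>
      \<bar>ev e v - ev e u - Dv P e u (\<lambda>p. v p - u p)\<bar> \<le> K * (dst P v u)\<^sup>2"
  using ve
proof (induction e)
  case (Cst c)
  show ?case by (intro exI[of _ "\<bar>c\<bar>"]) (auto simp: Dv_def dst_nonneg)
next
  case (Vr q)
  then have q: "q \<in> P" by simp
  have D: "Dv P (Vr q) u w = w q" for u w
  proof -
    have "Dv P (Vr q) u w = (\<Sum>p\<in>P. (if p = q then w p else 0))"
      unfolding Dv_def by (rule sum.cong) auto
    then show ?thesis using P q by simp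
  qed
  show ?case
  proof (intro exI[of _ "\<bar>\<theta> q\<bar> + 1"] conjI allI impI)
    fix u v assume u: "dst P u \<theta> \<le> 1" and v: "dst P v \<theta> \<le> 1"
    have "\<bar>v q - \<theta> q\<bar> \<le> 1" using dst_coord[OF P q, of v \<theta>] v by simp
    then show "\<bar>ev (Vr q) v\<bar> \<le> \<bar>\<theta> q\<bar> + 1" by simp
    show "\<bar>ev (Vr q) v - ev (Vr q) u\<bar> \<le> (\<bar>\<theta> q\<bar> + 1) * dst P v u"
      using dst_coord[OF P q, of v u] dst_nonneg[of P v u]
      by simp (smt (verit) mult_le_cancel_right1 mult_nonneg_nonneg)
    show "\<bar>ev (Vr q) v - ev (Vr q) u - Dv P (Vr q) u (\<lambda>p. v p - u p)\<bar>
        \<le> (\<bar>\<theta> q\<bar> + 1) * (dst P v u)\<^sup>2"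
      by (simp add: D)
  qed simp
next
  case (Ad a b)
  then obtain Ka Kb where Ka: "Ka \<ge> 0" "\<forall>u v. dst P u \<theta> \<le> 1 \<longrightarrow> dst P v \<theta> \<le> 1 \<longrightarrow>
      \<bar>ev a v\<bar> \<le> Ka \<and> \<bar>ev a v - ev a u\<bar> \<le> Ka * dst P v u \<and>
      \<bar>ev a v - ev a u - Dv P a u (\<lambda>p. v p - u p)\<bar> \<le> Ka * (dst P v u)\<^sup>2"
    and Kb: "Kb \<ge> 0" "\<forall>u v. dst P u \<theta> \<le> 1 \<longrightarrow> dst P v \<theta> \<le> 1 \<longrightarrow>
      \<bar>ev b v\<bar> \<le> Kb \<and> \<bar>ev b v - ev b u\<bar> \<le> Kb * dst P v u \<and>
      \<bar>ev b v - ev b u - Dv P b u (\<lambda>p. v p - u p)\<bar> \<le> Kb * (dst P v u)\<^sup>2"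
    by auto
  have D: "Dv P (Ad a b) u w = Dv P a u w + Dv P b u w" for u w
    unfolding Dv_def by (simp add: distrib_right sum.distrib)
  show ?case
  proof (intro exI[of _ "Ka + Kb"] conjI allI impI)
    fix u v assume u: "dst P u \<theta> \<le> 1" and v: "dst P v \<theta> \<le> 1"
    note A = Ka(2)[rule_format, OF u v] and B = Kb(2)[rule_format, OF u v]
    show "\<bar>ev (Ad a b) v\<bar> \<le> Ka + Kb" using A B by simp linarith
    show "\<bar>ev (Ad a b) v - ev (Ad a b) u\<bar> \<le> (Ka + Kb) * dst P v u"
      using A B by (simp add: distrib_right) linarith
    show "\<bar>ev (Ad a b) v - ev (Ad a b) u - Dv P (Ad a b) u (\<lambda>p. v p - u p)\<bar>
        \<le> (Ka + Kb) * (dst P v u)\<^sup>2"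
      using A B by (simp add: D distrib_right) linarith
  qed (use Ka Kb in simp)
next
  case (Ml a b)
  then obtain Ka Kb where Ka: "Ka \<ge> 0" "\<forall>u v. dst P u \<theta> \<le> 1 \<longrightarrow> dst P v \<theta> \<le> 1 \<longrightarrow>
      \<bar>ev a v\<bar> \<le> Ka \<and> \<bar>ev a v - ev a u\<bar> \<le> Ka * dst P v u \<and>
      \<bar>ev a v - ev a u - Dv P a u (\<lambda>p. v p - u p)\<bar> \<le> Ka * (dst P v u)\<^sup>2"
    and Kb: "Kb \<ge> 0" "\<forall>u v. dst P u \<theta> \<le> 1 \<longrightarrow> dst P v \<theta> \<le> 1 \<longrightarrow>
      \<bar>ev b v\<bar> \<le> Kb \<and> \<bar>ev b v - ev b u\<bar> \<le> Kb * dst P v u \<and>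
      \<bar>ev b v - ev b u - Dv P b u (\<lambda>p. v p - u p)\<bar> \<le> Kb * (dst P v u)\<^sup>2"
    by auto
  have D: "Dv P (Ml a b) u w = ev b u * Dv P a u w + ev a u * Dv P b u w" for u w
    unfolding Dv_def by (simp add: algebra_simps sum.distrib sum_distrib_left)
  show ?case
  proof (intro exI[of _ "3 * Ka * Kb"] conjI allI impI)
    fix u v assume u: "dst P u \<theta> \<le> 1" and v: "dst P v \<theta> \<le> 1"
    have uu: "dst P u \<theta> \<le> 1" by fact
    note A = Ka(2)[rule_format, OF u v] and B = Kb(2)[rule_format, OF u v]
    note A' = Ka(2)[rule_format, OF v u] and B' = Kb(2)[rule_format, OF v u]
    define d where "d = dst P v u"
    have d0: "d \<ge> 0" unfolding d_def by (rule dst_nonneg)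
    have au: "\<bar>ev a u\<bar> \<le> Ka" and bu: "\<bar>ev b u\<bar> \<le> Kb" using A' B' by auto
    have av: "\<bar>ev a v\<bar> \<le> Ka" and bv: "\<bar>ev b v\<bar> \<le> Kb" using A B by auto
    have "\<bar>ev a v * ev b v\<bar> \<le> Ka * Kb"
      by (simp add: abs_mult mult_mono' av bv Ka(1))
    also have "\<dots> \<le> 3 * Ka * Kb" using Ka(1) Kb(1) by simp
    finally show "\<bar>ev (Ml a b) v\<bar> \<le> 3 * Ka * Kb" by simp
    define da where "da = ev a v - ev a u"
    define db where "db = ev b v - ev b u"
    have da: "\<bar>da\<bar> \<le> Ka * d" and db: "\<bar>db\<bar> \<le> Kb * d" using A B by (auto simp: da_def db_def d_def)
    have eq1: "ev a v * ev b v - ev a u * ev b u = ev a v * db + ev b u * da"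
      by (simp add: da_def db_def algebra_simps)
    have "\<bar>ev a v * db\<bar> \<le> Ka * (Kb * d)"
      by (simp add: abs_mult mult_mono' av db Ka(1))
    moreover have "\<bar>ev b u * da\<bar> \<le> Kb * (Ka * d)"
      by (simp add: abs_mult mult_mono' bu da Kb(1))
    ultimately have "\<bar>ev a v * ev b v - ev a u * ev b u\<bar> \<le> 2 * Ka * Kb * d"
      unfolding eq1 by (simp add: algebra_simps)
    also have "\<dots> \<le> 3 * Ka * Kb * d" using Ka(1) Kb(1) d0 by (simp add: mult_right_mono)
    finally show "\<bar>ev (Ml a b) v - ev (Ml a b) u\<bar> \<le> 3 * Ka * Kb * dst P v u"
      by (simp add: d_def)
    define ra where "ra = da - Dv P a u (\<lambda>p. v p - u p)"
    define rb where "rb = db - Dv P b u (\<lambda>p. v p - u p)"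
    have ra: "\<bar>ra\<bar> \<le> Ka * d\<^sup>2" and rb: "\<bar>rb\<bar> \<le> Kb * d\<^sup>2"
      using A B by (auto simp: ra_def rb_def da_def db_def d_def)
    have eq2: "ev (Ml a b) v - ev (Ml a b) u - Dv P (Ml a b) u (\<lambda>p. v p - u p)
        = ev a u * rb + ev b u * ra + da * db"
      by (simp add: D ra_def rb_def da_def db_def algebra_simps)
    have "\<bar>ev a u * rb\<bar> \<le> Ka * (Kb * d\<^sup>2)"
      by (simp add: abs_mult mult_mono' au rb Ka(1))
    moreover have "\<bar>ev b u * ra\<bar> \<le> Kb * (Ka * d\<^sup>2)"
      by (simp add: abs_mult mult_mono' bu ra Kb(1))
    moreover have "\<bar>da * db\<bar> \<le> (Ka * d) * (Kb * d)"
      by (simp add: abs_mult mult_mono' da db Ka(1) d0)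
    ultimately show "\<bar>ev (Ml a b) v - ev (Ml a b) u - Dv P (Ml a b) u (\<lambda>p. v p - u p)\<bar>
        \<le> 3 * Ka * Kb * (dst P v u)\<^sup>2"
      unfolding eq2 d_def[symmetric] by (simp add: power2_eq_square algebra_simps)
  qed (use Ka Kb in simp)
qed

definition tay :: "param set \<Rightarrow> (param \<Rightarrow> real) \<Rightarrow> real \<Rightarrow> pexp \<Rightarrow> bool" where
  "tay P \<theta> K e \<longleftrightarrow> (\<forall>u v. dst P u \<theta> \<le> 1 \<longrightarrow> dst P v \<theta> \<le> 1 \<longrightarrow>
      \<bar>ev e v\<bar> \<le> K \<and> \<bar>ev e v - ev e u\<bar> \<le> K * dst P v u \<and>
      \<bar>ev e v - ev e u - Dv P e u (\<lambda>p. v p - u p)\<bar> \<le> K * (dst P v u)\<^sup>2)"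

lemma tay_mono: "tay P \<theta> K e \<Longrightarrow> K \<le> K' \<Longrightarrow> tay P \<theta> K' e"
  unfolding tay_def
proof (intro allI impI conjI, goal_cases)
  case (1 u v)
  then show ?case by force
next
  case (2 u v)
  have "K * dst P v u \<le> K' * dst P v u" using 2(2) dst_nonneg by (rule mult_right_mono)
  then show ?case using 2 by force
next
  case (3 u v)
  have "K * (dst P v u)\<^sup>2 \<le> K' * (dst P v u)\<^sup>2" using 3(2) by (rule mult_right_mono) simp
  then show ?case using 3 by force
qed

lemma taylor_set:
  assumes P: "finite P" and S: "finite S" and vS: "\<forall>e\<in>S. vars e \<subseteq> P"
  shows "\<exists>K\<ge>0. \<forall>e\<in>S. tay P \<theta> K e"
  using S vS
proof (induction S rule: finite_induct)
  case empty
  then show ?case by auto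
next
  case (insert e S)
  then obtain K where K: "K \<ge> 0" "\<forall>e\<in>S. tay P \<theta> K e" by auto
  obtain K' where K': "K' \<ge> 0" "tay P \<theta> K' e"
    using taylor[OF P, of e \<theta>] insert.prems unfolding tay_def by auto
  show ?case
    by (rule exI[of _ "K + K'"]) (use K K' in \<open>auto intro: tay_mono\<close>)
qed

lemma sum_W:
  assumes P: "finite P" and Cl: "distinct Cl" "set Cl \<subseteq> P" and j: "j \<in> P" "j \<notin> set Cl"
    and F0: "\<And>p. F p 0 = 0"
  shows "(\<Sum>p\<in>P. F p ((\<Sum>b<length Cl. if Cl ! b = p then z b else 0) + (if p = j then s else 0)))
    = (\<Sum>b<length Cl. F (Cl ! b) (z b)) + F j s"
proof -
  define W where "W p = (\<Sum>b<length Cl. if Cl ! b = p then z b else 0) + (if p = j then s else 0)" for p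
  have W0: "W p = 0" if "p \<notin> set Cl" "p \<noteq> j" for p
    unfolding W_def using that by (auto intro!: sum.neutral dest: nth_mem)
  have "(\<Sum>b<length Cl. if Cl ! b = j then z b else 0) = 0"
    by (rule sum.neutral) (use j nth_mem in force)
  then have Wj: "W j = s" unfolding W_def by simp
  have Wc: "W (Cl ! b) = z b" if "b < length Cl" for b
  proof -
    have "(\<Sum>b'<length Cl. if Cl ! b' = Cl ! b then z b' else 0) = (\<Sum>b'<length Cl. if b' = b then z b' else 0)"
      by (rule sum.cong) (use that Cl(1) nth_eq_iff_index_eq in auto)
    also have "\<dots> = z b" using that by simp
    finally show ?thesis unfolding W_def using that j(2) nth_mem[OF that] by auto
  qed
  have split: "P = set Cl \<union> ({j} \<union> (P - set Cl - {j}))" using Cl j by auto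
  have "(\<Sum>p\<in>P. F p (W p)) = (\<Sum>p\<in>set Cl. F p (W p)) + ((\<Sum>p\<in>{j}. F p (W p)) + (\<Sum>p\<in>P - set Cl - {j}. F p (W p)))"
    by (subst split, subst sum.union_disjoint, (use P j in auto)[3], subst sum.union_disjoint) (use P j in auto)
  also have "(\<Sum>p\<in>P - set Cl - {j}. F p (W p)) = 0"
    by (rule sum.neutral) (auto simp: W0 F0)
  also have "(\<Sum>p\<in>set Cl. F p (W p)) = (\<Sum>b<length Cl. F (Cl ! b) (W (Cl ! b)))"
  proof -
    have "set Cl = (\<lambda>b. Cl ! b) ` {..<length Cl}" by (auto simp: set_conv_nth)
    moreover have "inj_on (\<lambda>b. Cl ! b) {..<length Cl}" using Cl(1) by (auto simp: inj_on_def nth_eq_iff_index_eq)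
    ultimately show ?thesis by (simp add: sum.reindex)
  qed
  also have "\<dots> = (\<Sum>b<length Cl. F (Cl ! b) (z b))" by (rule sum.cong) (auto simp: Wc)
  finally show ?thesis unfolding W_def[symmetric] by (simp add: Wj)
qed

lemma const_quadratic:
  fixes g :: "real \<Rightarrow> real"
  assumes C: "\<And>s t. s \<in> {a..b} \<Longrightarrow> t \<in> {a..b} \<Longrightarrow> \<bar>g s - g t\<bar> \<le> C * (s - t)\<^sup>2"
    and t: "t \<in> {a..b}"
  shows "g t = g a"
proof -
  show ?thesis
  proof (cases "t = a")
    case True then show ?thesis by simp
  next
    case False
    then have ab: "a < b" using t by auto
  have C0: "C \<ge> 0"
  proof -
    have "\<bar>g b - g a\<bar> \<le> C * (b - a)\<^sup>2" using C[of b a] ab by auto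
    moreover have "(b - a)\<^sup>2 > 0" using ab by simp
    ultimately show ?thesis by (smt (verit) zero_le_mult_iff)
  qed
  have bnd: "\<bar>g t - g a\<bar> \<le> C * (t - a)\<^sup>2 / real n" if n: "n > 0" for n :: nat
  proof -
    define h where "h = (t - a) / real n"
    define q where "q k = a + real k * h" for k :: nat
    have qin: "q k \<in> {a..b}" if "k \<le> n" for k
    proof -
      have "real k * (t - a) / real n \<le> t - a"
        using that n t mult_right_mono[of "real k" "real n" "t - a"] by (simp add: divide_le_eq mult.commute)
      moreover have "0 \<le> real k * (t - a) / real n" using t by simp
      ultimately show ?thesis using t unfolding q_def h_def by auto
    qed
    have qn: "q n = t" using n unfolding q_def h_def by simp
    have q0: "q 0 = a" unfolding q_def by simp
    have "g t - g a = (\<Sum>k<n. g (q (Suc k)) - g (q k))"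
      by (subst sum_lessThan_telescope) (simp add: qn q0)
    then have "\<bar>g t - g a\<bar> \<le> (\<Sum>k<n. \<bar>g (q (Suc k)) - g (q k)\<bar>)"
      by (simp add: sum_abs)
    also have "\<dots> \<le> (\<Sum>k<n. C * h\<^sup>2)"
    proof (rule sum_mono)
      fix k assume "k \<in> {..<n}"
      then have "\<bar>g (q (Suc k)) - g (q k)\<bar> \<le> C * (q (Suc k) - q k)\<^sup>2"
        by (intro C qin) auto
      also have "q (Suc k) - q k = h" unfolding q_def by (simp add: algebra_simps)
      finally show "\<bar>g (q (Suc k)) - g (q k)\<bar> \<le> C * h\<^sup>2" .
    qed
    also have "\<dots> = C * (t - a)\<^sup>2 / real n"
      using n unfolding h_def by (simp add: power2_eq_square field_simps)
    finally show ?thesis .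
  qed
  have "\<bar>g t - g a\<bar> \<le> 0"
  proof (rule ccontr)
    assume "\<not> \<bar>g t - g a\<bar> \<le> 0"
    then have pos: "\<bar>g t - g a\<bar> > 0" by simp
    obtain n :: nat where n: "n > C * (t - a)\<^sup>2 / \<bar>g t - g a\<bar>" using reals_Archimedean2 by blast
    then have n0: "n > 0" using C0 pos
      by (metis divide_nonneg_pos mult_nonneg_nonneg of_nat_0_less_iff order_le_less_trans zero_le_power2)
    have "C * (t - a)\<^sup>2 < n * \<bar>g t - g a\<bar>" using n pos by (simp add: divide_less_eq)
    moreover have "\<bar>g t - g a\<bar> * n \<le> C * (t - a)\<^sup>2" using bnd[OF n0] n0 by (simp add: le_divide_eq)
    ultimately show False by (simp add: mult.commute)
  qed
  then show ?thesis by simp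
  qed
qed

definition minor :: "('i \<Rightarrow> pexp) \<Rightarrow> 'i list \<Rightarrow> param list \<Rightarrow> (param \<Rightarrow> real) \<Rightarrow> real" where
  "minor e Rl Cl x = det (mat (length Rl) (length Rl) (\<lambda>(a, b). ev (dv (Cl ! b) (e (Rl ! a))) x))"

lemma dst_cong: "(\<And>p. p \<in> P \<Longrightarrow> v p = v' p) \<Longrightarrow> dst P u v = dst P u v'"
  unfolding dst_def by (rule sum.cong) auto

lemma dst_self: "dst P u u = 0" unfolding dst_def by simp

locale core =
  fixes P :: "param set" and I :: "'i set" and e :: "'i \<Rightarrow> pexp"
    and Rl :: "'i list" and Cl :: "param list" and j :: param and \<theta> :: "param \<Rightarrow> real"
  assumes finP: "finite P" and finI: "finite I"
    and ve: "\<And>i. i \<in> I \<Longrightarrow> vars (e i) \<subseteq> P"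
    and Rl: "distinct Rl" "set Rl \<subseteq> I"
    and Cl: "distinct Cl" "set Cl \<subseteq> P" "length Cl = length Rl"
    and jP: "j \<in> P" and jC: "j \<notin> set Cl"
    and th: "\<theta> \<in> PiE P (\<lambda>_. UNIV)"
    and D0ne: "minor e Rl Cl \<theta> \<noteq> 0"
    and maxl: "\<And>i x. i \<in> I \<Longrightarrow> i \<notin> set Rl \<Longrightarrow> x \<in> PiE P (\<lambda>_. UNIV) \<Longrightarrow>
        minor e (Rl @ [i]) (Cl @ [j]) x = 0"
begin

abbreviation "r \<equiv> length Rl"

definition "J0 = mat r r (\<lambda>(a, b). ev (dv (Cl ! b) (e (Rl ! a))) \<theta>)"
definition "A = adj_mat J0"
definition "D0 = det J0"
definition W :: "(nat \<Rightarrow> real) \<Rightarrow> real \<Rightarrow> param \<Rightarrow> real" where "W y t = (\<lambda>p. (\<Sum>b<r. if Cl ! b = p then y b else 0) + (if p = j then t else 0))"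
definition "X y t = (\<lambda>p. if p \<in> P then \<theta> p + W y t p else undefined)"
definition "G a y t = ev (e (Rl ! a)) (X y t) - ev (e (Rl ! a)) \<theta>"
definition "T t y = (\<lambda>b. y b - (\<Sum>a<r. A $$ (b, a) * G a y t) / D0)"
definition ny :: "(nat \<Rightarrow> real) \<Rightarrow> real" where "ny y = (\<Sum>b<r. \<bar>y b\<bar>)"
definition "\<alpha> = (\<Sum>b<r. \<Sum>a<r. \<bar>A $$ (b, a)\<bar>) / \<bar>D0\<bar>"

lemma D0_minor: "D0 = minor e Rl Cl \<theta>"
  unfolding D0_def J0_def minor_def by simp

lemma D0_nz: "D0 \<noteq> 0" using D0ne D0_minor by simp

lemma Rl_I: "a < r \<Longrightarrow> Rl ! a \<in> I" using Rl nth_mem by blast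
lemma Cl_P: "b < r \<Longrightarrow> Cl ! b \<in> P" using Cl nth_mem by (metis subsetD)

lemma X_in: "X y t \<in> PiE P (\<lambda>_. UNIV)" unfolding X_def by auto

lemma X_diff: "p \<in> P \<Longrightarrow> X y t p - X y' t' p = W (\<lambda>b. y b - y' b) (t - t') p"
  unfolding X_def W_def by (auto simp: sum_subtractf[symmetric] intro!: sum.cong)

lemma sumW: "(\<Sum>p\<in>P. F p (W z s p)) = (\<Sum>b<r. F (Cl ! b) (z b)) + F j s" if "\<And>p. F p 0 = 0"
  using sum_W[OF finP Cl(1,2) jP jC, of F z s] that Cl(3) unfolding W_def by simp

lemma dst_X: "dst P (X y t) (X y' t') = ny (\<lambda>b. y b - y' b) + \<bar>t - t'\<bar>"
proof -
  have "dst P (X y t) (X y' t') = (\<Sum>p\<in>P. \<bar>W (\<lambda>b. y b - y' b) (t - t') p\<bar>)"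
    unfolding dst_def by (rule sum.cong) (auto simp: X_diff)
  also have "\<dots> = ny (\<lambda>b. y b - y' b) + \<bar>t - t'\<bar>"
    by (subst sumW) (auto simp: ny_def)
  finally show ?thesis .
qed

lemma X0: "X (\<lambda>_. 0) 0 = \<theta>"
  using th unfolding X_def W_def by (auto simp: PiE_def extensional_def)

lemma dst_X_th: "dst P (X y t) \<theta> = ny y + \<bar>t\<bar>"
  using dst_X[of y t "\<lambda>_. 0" 0] by (simp add: X0)

lemma Dv_X: "Dv P ex u (\<lambda>p. X y t p - X y' t' p)
    = (\<Sum>b<r. ev (dv (Cl ! b) ex) u * (y b - y' b)) + ev (dv j ex) u * (t - t')"
proof -
  have "Dv P ex u (\<lambda>p. X y t p - X y' t' p) = (\<Sum>p\<in>P. ev (dv p ex) u * W (\<lambda>b. y b - y' b) (t - t') p)"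
    unfolding Dv_def by (rule sum.cong) (auto simp: X_diff)
  also have "\<dots> = (\<Sum>b<r. ev (dv (Cl ! b) ex) u * (y b - y' b)) + ev (dv j ex) u * (t - t')"
    by (subst sumW) auto
  finally show ?thesis .
qed

lemma ny_nonneg: "ny y \<ge> 0" unfolding ny_def by (auto intro: sum_nonneg)

lemma ny_triangle: "ny (\<lambda>b. f b - h b) \<le> ny (\<lambda>b. f b - g b) + ny (\<lambda>b. g b - h b)"
  unfolding ny_def sum.distrib[symmetric] by (rule sum_mono) auto

lemma ny_triangle0: "ny f \<le> ny g + ny (\<lambda>b. f b - g b)"
  unfolding ny_def sum.distrib[symmetric] by (rule sum_mono) auto

lemma ny_coord: "b < r \<Longrightarrow> \<bar>y b\<bar> \<le> ny y"
  unfolding ny_def by (rule member_le_sum) auto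

lemma alpha_nonneg: "\<alpha> \<ge> 0" unfolding \<alpha>_def by (auto intro!: sum_nonneg)

lemma adj_bound:
  assumes "\<And>a. a < r \<Longrightarrow> \<bar>w a\<bar> \<le> B"
  shows "ny (\<lambda>b. (\<Sum>a<r. A $$ (b, a) * w a) / D0) \<le> \<alpha> * B"
proof -
  have "ny (\<lambda>b. (\<Sum>a<r. A $$ (b, a) * w a) / D0) = (\<Sum>b<r. \<bar>\<Sum>a<r. A $$ (b, a) * w a\<bar>) / \<bar>D0\<bar>"
    unfolding ny_def abs_divide by (rule sum_divide_distrib[symmetric])
  also have "\<dots> \<le> (\<Sum>b<r. \<Sum>a<r. \<bar>A $$ (b, a)\<bar> * B) / \<bar>D0\<bar>"
  proof (rule divide_right_mono, rule sum_mono)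
    fix b
    have "\<bar>\<Sum>a<r. A $$ (b, a) * w a\<bar> \<le> (\<Sum>a<r. \<bar>A $$ (b, a) * w a\<bar>)" by (rule sum_abs)
    also have "\<dots> \<le> (\<Sum>a<r. \<bar>A $$ (b, a)\<bar> * B)"
      by (rule sum_mono) (auto simp: abs_mult intro!: mult_left_mono assms)
    finally show "\<bar>\<Sum>a<r. A $$ (b, a) * w a\<bar> \<le> (\<Sum>a<r. \<bar>A $$ (b, a)\<bar> * B)" .
  qed simp
  also have "\<dots> = \<alpha> * B" unfolding \<alpha>_def by (simp add: sum_distrib_right)
  finally show ?thesis .
qed

lemma J0_carrier: "J0 \<in> carrier_mat r r" unfolding J0_def by simp

lemma adj_J0: "b < r \<Longrightarrow> c < r \<Longrightarrow> (\<Sum>a<r. A $$ (b, a) * J0 $$ (a, c)) = (if b = c then D0 else 0)"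
proof -
  assume bc: "b < r" "c < r"
  have "(adj_mat J0 * J0) $$ (b, c) = (D0 \<cdot>\<^sub>m 1\<^sub>m r) $$ (b, c)"
    using adj_mat(3)[OF J0_carrier] D0_def by simp
  moreover have "(adj_mat J0 * J0) $$ (b, c) = (\<Sum>a<r. A $$ (b, a) * J0 $$ (a, c))"
    using bc adj_mat(1)[OF J0_carrier] J0_carrier
    by (simp add: scalar_prod_def A_def atLeast0LessThan)
  ultimately show ?thesis using bc by simp
qed

lemma adj_J0_apply: "b < r \<Longrightarrow> (\<Sum>a<r. A $$ (b, a) * (\<Sum>c<r. J0 $$ (a, c) * z c)) = D0 * z b"
proof -
  assume b: "b < r"
  have "(\<Sum>a<r. A $$ (b, a) * (\<Sum>c<r. J0 $$ (a, c) * z c)) = (\<Sum>c<r. (\<Sum>a<r. A $$ (b, a) * J0 $$ (a, c)) * z c)"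
    by (simp add: sum_distrib_left sum_distrib_right mult.assoc) (rule sum.swap)
  also have "\<dots> = (\<Sum>c<r. (if b = c then D0 * z c else 0))"
    using b by (intro sum.cong) (auto simp: adj_J0)
  also have "\<dots> = D0 * z b" using b by simp
  finally show ?thesis .
qed

lemma J0_apply_adj: "a < r \<Longrightarrow> (\<Sum>b<r. J0 $$ (a, b) * (\<Sum>a'<r. A $$ (b, a') * z a')) = D0 * z a"
proof -
  assume a: "a < r"
  have AJ: "(\<Sum>b<r. J0 $$ (a, b) * A $$ (b, a')) = (if a = a' then D0 else 0)" if "a' < r" for a'
  proof -
    have "(J0 * adj_mat J0) $$ (a, a') = (D0 \<cdot>\<^sub>m 1\<^sub>m r) $$ (a, a')"
      using adj_mat(2)[OF J0_carrier] D0_def by simp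
    moreover have "(J0 * adj_mat J0) $$ (a, a') = (\<Sum>b<r. J0 $$ (a, b) * A $$ (b, a'))"
      using a that adj_mat(1)[OF J0_carrier] J0_carrier
      by (simp add: scalar_prod_def A_def atLeast0LessThan)
    ultimately show ?thesis using a that by simp
  qed
  have "(\<Sum>b<r. J0 $$ (a, b) * (\<Sum>a'<r. A $$ (b, a') * z a')) = (\<Sum>a'<r. (\<Sum>b<r. J0 $$ (a, b) * A $$ (b, a')) * z a')"
    by (simp add: sum_distrib_left sum_distrib_right mult.assoc) (rule sum.swap)
  also have "\<dots> = (\<Sum>a'<r. (if a = a' then D0 * z a' else 0))"
    using a by (intro sum.cong) (auto simp: AJ)
  also have "\<dots> = D0 * z a" using a by simp
  finally show ?thesis .
qed

end

context core begin

definition "Bm i x = mat (Suc r) (Suc r) (\<lambda>(a, b). ev (dv ((Cl @ [j]) ! b) (e ((Rl @ [i]) ! a))) x)"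

lemma Bm_carrier: "Bm i x \<in> carrier_mat (Suc r) (Suc r)" unfolding Bm_def by simp

lemma minor_Bm: "minor e (Rl @ [i]) (Cl @ [j]) x = det (Bm i x)"
  unfolding minor_def Bm_def by simp

lemma RlI_I: "i \<in> I \<Longrightarrow> a < Suc r \<Longrightarrow> (Rl @ [i]) ! a \<in> I"
  using Rl_I by (cases "a < r") (auto simp: nth_append)

lemma ClJ_P: "b < Suc r \<Longrightarrow> (Cl @ [j]) ! b \<in> P"
  using Cl_P jP Cl(3) by (cases "b < r") (auto simp: nth_append)

lemma pf_entry: "i \<in> I \<Longrightarrow> p \<in> P \<Longrightarrow> poly_fun P (ev (dv p (e i)))"
  by (rule ev_poly_fun) (use vars_dv ve in blast)

lemma pf_minor: "poly_fun P (minor e Rl Cl)"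
proof -
  have "poly_fun P (\<lambda>x. det (mat r r (\<lambda>(a, b). ev (dv (Cl ! b) (e (Rl ! a))) x)))"
    by (rule poly_fun_det[where n = r]) (auto intro: pf_entry Rl_I Cl_P)
  then show ?thesis unfolding minor_def[abs_def] by simp
qed

lemma adj_Bm: "\<rho> < Suc r \<Longrightarrow> adj_mat (Bm i x) $$ (r, \<rho>) = (-1) ^ (\<rho> + r) * det (mat_delete (Bm i x) \<rho> r)"
  unfolding adj_mat_def cofactor_def by (simp add: Bm_def)

lemma pf_cof: "i \<in> I \<Longrightarrow> \<rho> < Suc r \<Longrightarrow> poly_fun P (\<lambda>x. adj_mat (Bm i x) $$ (r, \<rho>))"
proof -
  assume i: "i \<in> I" and \<rho>: "\<rho> < Suc r"
  have "poly_fun P (\<lambda>x. det (mat_delete (Bm i x) \<rho> r))"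
  proof (rule poly_fun_det[where n = r])
    fix x show "mat_delete (Bm i x) \<rho> r \<in> carrier_mat r r"
      using mat_delete_carrier[OF Bm_carrier] by simp
  next
    fix a b assume ab: "a < r" "b < r"
    define a' where "a' = (if a < \<rho> then a else Suc a)"
    define b' where "b' = (if b < r then b else Suc b)"
    have ab': "a' < Suc r" "b' < Suc r" using ab unfolding a'_def b'_def by auto
    have "(\<lambda>x. mat_delete (Bm i x) \<rho> r $$ (a, b)) = ev (dv ((Cl @ [j]) ! b') (e ((Rl @ [i]) ! a')))"
      using ab ab' unfolding mat_delete_def Bm_def a'_def b'_def by (auto simp: fun_eq_iff)
    then show "poly_fun P (\<lambda>x. mat_delete (Bm i x) \<rho> r $$ (a, b))"
      using pf_entry[OF RlI_I[OF i ab'(1)] ClJ_P[OF ab'(2)]] by simp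
  qed
  then show ?thesis using \<rho> by (simp add: adj_Bm poly_fun_cmult)
qed

definition "ef = (SOME ex. vars ex \<subseteq> P \<and> minor e Rl Cl = ev ex)"
definition "cf i \<rho> = (SOME ex. vars ex \<subseteq> P \<and> (\<lambda>x. adj_mat (Bm i x) $$ (r, \<rho>)) = ev ex)"

lemma ef: "vars ef \<subseteq> P \<and> minor e Rl Cl = ev ef"
  unfolding ef_def by (rule someI_ex) (rule poly_fun_ex[OF pf_minor])

lemma cf: "i \<in> I \<Longrightarrow> \<rho> < Suc r \<Longrightarrow> vars (cf i \<rho>) \<subseteq> P \<and> (\<lambda>x. adj_mat (Bm i x) $$ (r, \<rho>)) = ev (cf i \<rho>)"
  unfolding cf_def by (rule someI_ex) (rule poly_fun_ex[OF pf_cof])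

definition "SS = e ` I \<union> (\<lambda>(p, i). dv p (e i)) ` (P \<times> I) \<union> {ef} \<union> (\<lambda>(i, \<rho>). cf i \<rho>) ` (I \<times> {..<Suc r})"

lemma SS_fin: "finite SS" unfolding SS_def using finP finI by auto

lemma SS_vars: "\<forall>ex\<in>SS. vars ex \<subseteq> P"
proof
  fix ex assume "ex \<in> SS"
  then consider (a) i where "i \<in> I" "ex = e i" | (b) p i where "p \<in> P" "i \<in> I" "ex = dv p (e i)"
    | (c) "ex = ef" | (d) i \<rho> where "i \<in> I" "\<rho> < Suc r" "ex = cf i \<rho>"
    unfolding SS_def by auto
  then show "vars ex \<subseteq> P"
  proof cases
    case a then show ?thesis using ve by simp
  next
    case b then show ?thesis using ve vars_dv by blast
  next
    case c then show ?thesis using ef by simp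
  next
    case d then show ?thesis using cf by simp
  qed
qed

definition "K = (SOME K. K \<ge> 1 \<and> (\<forall>ex\<in>SS. tay P \<theta> K ex))"

lemma K: "K \<ge> 1 \<and> (\<forall>ex\<in>SS. tay P \<theta> K ex)"
proof -
  obtain K0 where "K0 \<ge> 0" "\<forall>ex\<in>SS. tay P \<theta> K0 ex" using taylor_set[OF finP SS_fin SS_vars] by blast
  then have "\<exists>K. K \<ge> 1 \<and> (\<forall>ex\<in>SS. tay P \<theta> K ex)"
  proof (intro exI[of _ "K0 + 1"] conjI ballI)
    fix ex assume "ex \<in> SS"
    then have "tay P \<theta> K0 ex" using \<open>\<forall>ex\<in>SS. tay P \<theta> K0 ex\<close> by blast
    then show "tay P \<theta> (K0 + 1) ex" by (rule tay_mono) simp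
  qed (use \<open>K0 \<ge> 0\<close> in simp)
  then show ?thesis unfolding K_def by (rule someI_ex)
qed

lemma K1: "K \<ge> 1" using K by simp
lemma tay_e: "i \<in> I \<Longrightarrow> tay P \<theta> K (e i)" using K unfolding SS_def by auto
lemma tay_dv: "i \<in> I \<Longrightarrow> p \<in> P \<Longrightarrow> tay P \<theta> K (dv p (e i))" using K unfolding SS_def by auto
lemma tay_ef: "tay P \<theta> K ef" using K unfolding SS_def by auto
lemma tay_cf: "i \<in> I \<Longrightarrow> \<rho> < Suc r \<Longrightarrow> tay P \<theta> K (cf i \<rho>)" using K unfolding SS_def by auto

definition "M = \<alpha> * K + 1 + 2 * K / \<bar>D0\<bar>"
definition "\<rho> = 1 / (8 * M)"
definition "\<tau> = \<rho> / (2 * M)"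

lemma M1: "M \<ge> 1" unfolding M_def using alpha_nonneg K1 by (simp add: zero_le_mult_iff)
lemma rho_pos: "\<rho> > 0" unfolding \<rho>_def using M1 by simp
lemma tau_pos: "\<tau> > 0" unfolding \<tau>_def using M1 rho_pos by simp
lemma tau_le: "\<tau> \<le> \<rho>" unfolding \<tau>_def using M1 rho_pos by (simp add: divide_le_eq)
lemma aK_le: "\<alpha> * K \<le> M" unfolding M_def using K1 D0_nz by simp
lemma KD_le: "K \<le> M * \<bar>D0\<bar> / 2"
proof -
  have "2 * K / \<bar>D0\<bar> \<le> M" unfolding M_def using alpha_nonneg K1 by (simp add: zero_le_mult_iff)
  then show ?thesis using D0_nz by (simp add: divide_le_eq mult.commute)
qed
lemma rho_M: "\<rho> * M = 1 / 8" unfolding \<rho>_def using M1 by simp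

lemma rho_le: "\<rho> \<le> 1 / 8" unfolding \<rho>_def using M1 by (simp add: divide_le_eq)

lemma f1: "\<rho> + \<tau> \<le> 1"
  using tau_le rho_le by linarith

lemma f2: "\<alpha> * K * (3 * \<rho> + \<tau>) \<le> 1 / 2"
proof -
  have "\<alpha> * K * (3 * \<rho> + \<tau>) \<le> M * (4 * \<rho>)"
    using aK_le tau_le rho_pos tau_pos alpha_nonneg K1 M1 by (intro mult_mono) auto
  also have "\<dots> = 1 / 2" using rho_M by (simp add: algebra_simps)
  finally show ?thesis .
qed

lemma f3: "\<alpha> * K * \<tau> \<le> \<rho> / 2"
proof -
  have "\<alpha> * K * \<tau> \<le> M * \<tau>" using aK_le tau_pos by (intro mult_right_mono) auto
  also have "\<dots> = \<rho> / 2" unfolding \<tau>_def using M1 by simp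
  finally show ?thesis .
qed

lemma f4: "K * (\<rho> + \<tau>) \<le> \<bar>D0\<bar> / 8"
proof -
  have "K * (\<rho> + \<tau>) \<le> (M * \<bar>D0\<bar> / 2) * (2 * \<rho>)"
    using KD_le tau_le rho_pos tau_pos K1 by (intro mult_mono) auto
  also have "\<dots> = (\<rho> * M) * \<bar>D0\<bar>" by (simp add: algebra_simps)
  also have "\<dots> = \<bar>D0\<bar> / 8" using rho_M by simp
  finally show ?thesis .
qed

end

context core begin

lemma ny_cong: "(\<And>b. b < r \<Longrightarrow> f b = g b) \<Longrightarrow> ny f = ny g"
  unfolding ny_def by (rule sum.cong) auto

lemma ny_sub_le: "ny (\<lambda>b. y b - y' b) \<le> ny y + ny y'"
  unfolding ny_def sum.distrib[symmetric] by (rule sum_mono) auto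

lemma close: "ny y \<le> \<rho> \<Longrightarrow> \<bar>t\<bar> \<le> \<tau> \<Longrightarrow> dst P (X y t) \<theta> \<le> \<rho> + \<tau>"
  by (simp add: dst_X_th)

lemma close1: "ny y \<le> \<rho> \<Longrightarrow> \<bar>t\<bar> \<le> \<tau> \<Longrightarrow> dst P (X y t) \<theta> \<le> 1"
  using close f1 by fastforce

lemma tayE:
  assumes "tay P \<theta> K ex" "dst P u \<theta> \<le> 1" "dst P v \<theta> \<le> 1"
  shows "\<bar>ev ex v\<bar> \<le> K" "\<bar>ev ex v - ev ex u\<bar> \<le> K * dst P v u"
    "\<bar>ev ex v - ev ex u - Dv P ex u (\<lambda>p. v p - u p)\<bar> \<le> K * (dst P v u)\<^sup>2"
  using assms unfolding tay_def by blast+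

lemma th_close: "dst P \<theta> \<theta> \<le> 1" by (simp add: dst_self)

lemma J0_entry: "a < r \<Longrightarrow> c < r \<Longrightarrow> J0 $$ (a, c) = ev (dv (Cl ! c) (e (Rl ! a))) \<theta>"
  unfolding J0_def by simp

lemma Gdiff:
  assumes a: "a < r" and y: "ny y \<le> \<rho>" "ny y' \<le> \<rho>" and t: "\<bar>t\<bar> \<le> \<tau>" "\<bar>t'\<bar> \<le> \<tau>"
  shows "\<bar>G a y t - G a y' t' - ((\<Sum>c<r. ev (dv (Cl ! c) (e (Rl ! a))) (X y' t') * (y c - y' c))
            + ev (dv j (e (Rl ! a))) (X y' t') * (t - t'))\<bar> \<le> K * (dst P (X y t) (X y' t'))\<^sup>2"
    "\<bar>G a y t - G a y' t'\<bar> \<le> K * dst P (X y t) (X y' t')"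
proof -
  have i: "Rl ! a \<in> I" using a Rl_I by simp
  have c1: "dst P (X y' t') \<theta> \<le> 1" "dst P (X y t) \<theta> \<le> 1" using close1 y t by auto
  have eq: "G a y t - G a y' t' = ev (e (Rl ! a)) (X y t) - ev (e (Rl ! a)) (X y' t')"
    unfolding G_def by simp
  show "\<bar>G a y t - G a y' t' - ((\<Sum>c<r. ev (dv (Cl ! c) (e (Rl ! a))) (X y' t') * (y c - y' c))
            + ev (dv j (e (Rl ! a))) (X y' t') * (t - t'))\<bar> \<le> K * (dst P (X y t) (X y' t'))\<^sup>2"
    using tayE(3)[OF tay_e[OF i] c1] unfolding eq Dv_X .
  show "\<bar>G a y t - G a y' t'\<bar> \<le> K * dst P (X y t) (X y' t')"
    using tayE(2)[OF tay_e[OF i] c1] unfolding eq .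
qed

lemma T_diff_eq:
  assumes b: "b < r"
  shows "T t y b - T t' y' b = (\<Sum>a<r. A $$ (b, a) *
      ((\<Sum>c<r. J0 $$ (a, c) * (y c - y' c)) - (G a y t - G a y' t'))) / D0"
proof -
  define S1 where "S1 = (\<Sum>a<r. A $$ (b, a) * (\<Sum>c<r. J0 $$ (a, c) * (y c - y' c)))"
  define S2 where "S2 = (\<Sum>a<r. A $$ (b, a) * G a y t)"
  define S3 where "S3 = (\<Sum>a<r. A $$ (b, a) * G a y' t')"
  have yb: "y b - y' b = S1 / D0"
    using adj_J0_apply[OF b, of "\<lambda>c. y c - y' c"] D0_nz unfolding S1_def by simp
  have rhs: "(\<Sum>a<r. A $$ (b, a) * ((\<Sum>c<r. J0 $$ (a, c) * (y c - y' c)) - (G a y t - G a y' t')))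
      = S1 - (S2 - S3)"
    unfolding S1_def S2_def S3_def by (simp add: right_diff_distrib sum_subtractf)
  have T1: "T t y b = y b - S2 / D0" unfolding T_def S2_def by simp
  have T2: "T t' y' b = y' b - S3 / D0" unfolding T_def S3_def by simp
  have "(S1 - (S2 - S3)) / D0 = S1 / D0 - S2 / D0 + S3 / D0" by (simp add: diff_divide_distrib)
  then show ?thesis unfolding rhs T1 T2 using yb by linarith
qed

lemma contraction:
  assumes y: "ny y \<le> \<rho>" "ny y' \<le> \<rho>" and t: "\<bar>t\<bar> \<le> \<tau>"
  shows "ny (\<lambda>b. T t y b - T t y' b) \<le> ny (\<lambda>b. y b - y' b) / 2"
proof -
  define d where "d = ny (\<lambda>b. y b - y' b)"
  have d0: "d \<ge> 0" unfolding d_def by (rule ny_nonneg)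
  have d2: "d \<le> 2 * \<rho>" using ny_sub_le[of y y'] y unfolding d_def by linarith
  have dX: "dst P (X y t) (X y' t) = d" unfolding d_def by (simp add: dst_X)
  define u where "u = X y' t"
  define w where "w a = (\<Sum>c<r. J0 $$ (a, c) * (y c - y' c)) - (G a y t - G a y' t)" for a
  have wb: "\<bar>w a\<bar> \<le> K * (3 * \<rho> + \<tau>) * d" if a: "a < r" for a
  proof -
    define Q where "Q = G a y t - G a y' t - (\<Sum>c<r. ev (dv (Cl ! c) (e (Rl ! a))) u * (y c - y' c))"
    have Q: "\<bar>Q\<bar> \<le> K * d\<^sup>2" using Gdiff(1)[OF a y t t] unfolding Q_def u_def dX by simp
    have "K * d\<^sup>2 \<le> K * (2 * \<rho> * d)"
      using K1 d0 d2 by (intro mult_left_mono) (auto simp: power2_eq_square intro: mult_right_mono)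
    with Q have Q': "\<bar>Q\<bar> \<le> K * (2 * \<rho>) * d" by (simp add: mult.assoc)
    have E: "\<bar>J0 $$ (a, c) - ev (dv (Cl ! c) (e (Rl ! a))) u\<bar> \<le> K * (\<rho> + \<tau>)" if c: "c < r" for c
    proof -
      have "\<bar>ev (dv (Cl ! c) (e (Rl ! a))) u - ev (dv (Cl ! c) (e (Rl ! a))) \<theta>\<bar> \<le> K * dst P u \<theta>"
        using tayE(2)[OF tay_dv[OF Rl_I[OF a] Cl_P[OF c]] th_close close1[OF y(2) t]] unfolding u_def .
      also have "\<dots> \<le> K * (\<rho> + \<tau>)" using close[OF y(2) t] K1 unfolding u_def by simp
      finally show ?thesis using J0_entry[OF a c] by (simp add: abs_minus_commute)
    qed
    have weq: "w a = (\<Sum>c<r. (J0 $$ (a, c) - ev (dv (Cl ! c) (e (Rl ! a))) u) * (y c - y' c)) - Q"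
      unfolding w_def Q_def by (simp add: left_diff_distrib sum_subtractf)
    have "\<bar>\<Sum>c<r. (J0 $$ (a, c) - ev (dv (Cl ! c) (e (Rl ! a))) u) * (y c - y' c)\<bar>
        \<le> (\<Sum>c<r. K * (\<rho> + \<tau>) * \<bar>y c - y' c\<bar>)"
      by (rule order.trans[OF sum_abs], rule sum_mono) (auto simp: abs_mult intro!: mult_right_mono E)
    also have "\<dots> = K * (\<rho> + \<tau>) * d" unfolding d_def ny_def by (simp add: sum_distrib_left)
    finally have "\<bar>\<Sum>c<r. (J0 $$ (a, c) - ev (dv (Cl ! c) (e (Rl ! a))) u) * (y c - y' c)\<bar> \<le> K * (\<rho> + \<tau>) * d" .
    then have "\<bar>w a\<bar> \<le> K * (\<rho> + \<tau>) * d + K * (2 * \<rho>) * d" using Q' unfolding weq by linarith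
    also have "\<dots> = K * (3 * \<rho> + \<tau>) * d" by (simp add: algebra_simps)
    finally show ?thesis .
  qed
  have "ny (\<lambda>b. T t y b - T t y' b) = ny (\<lambda>b. (\<Sum>a<r. A $$ (b, a) * w a) / D0)"
    by (rule ny_cong) (simp add: T_diff_eq w_def)
  also have "\<dots> \<le> \<alpha> * (K * (3 * \<rho> + \<tau>) * d)" by (rule adj_bound) (rule wb)
  also have "\<dots> = (\<alpha> * K * (3 * \<rho> + \<tau>)) * d" by (simp add: algebra_simps)
  also have "\<dots> \<le> (1 / 2) * d" using f2 d0 by (rule mult_right_mono)
  finally show ?thesis unfolding d_def by simp
qed

lemma T0_bound:
  assumes t: "\<bar>t\<bar> \<le> \<tau>"
  shows "ny (T t (\<lambda>_. 0)) \<le> \<rho> / 2"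
proof -
  have z: "ny (\<lambda>_. 0) \<le> \<rho>" using rho_pos by (simp add: ny_def)
  have "ny (T t (\<lambda>_. 0)) = ny (\<lambda>b. T t (\<lambda>_. 0) b - T 0 (\<lambda>_. 0) b)"
  proof (rule ny_cong)
    fix b assume "b < r"
    have "G a (\<lambda>_. 0) 0 = 0" for a unfolding G_def X0 by simp
    then show "T t (\<lambda>_. 0) b = T t (\<lambda>_. 0) b - T 0 (\<lambda>_. 0) b" unfolding T_def by simp
  qed
  also have "\<dots> = ny (\<lambda>b. (\<Sum>a<r. A $$ (b, a) * (- (G a (\<lambda>_. 0) t - G a (\<lambda>_. 0) 0))) / D0)"
    by (rule ny_cong) (simp add: T_diff_eq)
  also have "\<dots> \<le> \<alpha> * (K * \<bar>t\<bar>)"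
  proof (rule adj_bound)
    fix a assume a: "a < r"
    have "\<bar>G a (\<lambda>_. 0) t - G a (\<lambda>_. 0) 0\<bar> \<le> K * dst P (X (\<lambda>_. 0) t) (X (\<lambda>_. 0) 0)"
      by (rule Gdiff(2)[OF a z z t]) (use tau_pos in simp)
    also have "dst P (X (\<lambda>_. 0) t) (X (\<lambda>_. 0) 0) = \<bar>t\<bar>" by (simp add: dst_X ny_def)
    finally show "\<bar>- (G a (\<lambda>_. 0) t - G a (\<lambda>_. 0) 0)\<bar> \<le> K * \<bar>t\<bar>" by simp
  qed
  also have "\<dots> = \<alpha> * K * \<bar>t\<bar>" by simp
  also have "\<dots> \<le> \<alpha> * K * \<tau>" using t alpha_nonneg K1 by (intro mult_left_mono) auto
  also have "\<dots> \<le> \<rho> / 2" by (rule f3)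
  finally show ?thesis .
qed

lemma T_t_lip:
  assumes y: "ny y \<le> \<rho>" and t: "\<bar>t\<bar> \<le> \<tau>" "\<bar>t'\<bar> \<le> \<tau>"
  shows "ny (\<lambda>b. T t y b - T t' y b) \<le> \<alpha> * K * \<bar>t - t'\<bar>"
proof -
  have "ny (\<lambda>b. T t y b - T t' y b) = ny (\<lambda>b. (\<Sum>a<r. A $$ (b, a) * (- (G a y t - G a y t'))) / D0)"
    by (rule ny_cong) (simp add: T_diff_eq)
  also have "\<dots> \<le> \<alpha> * (K * \<bar>t - t'\<bar>)"
  proof (rule adj_bound)
    fix a assume a: "a < r"
    have "\<bar>G a y t - G a y t'\<bar> \<le> K * dst P (X y t) (X y t')" by (rule Gdiff(2)[OF a y y t])
    also have "dst P (X y t) (X y t') = \<bar>t - t'\<bar>" by (simp add: dst_X ny_def)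
    finally show "\<bar>- (G a y t - G a y t')\<bar> \<le> K * \<bar>t - t'\<bar>" by simp
  qed
  finally show ?thesis by simp
qed

end

lemma adj_apply_gen:
  assumes B: "B \<in> carrier_mat n n" and i: "i < n"
  shows "(\<Sum>\<rho><n. adj_mat B $$ (i, \<rho>) * (\<Sum>q<n. B $$ (\<rho>, q) * z q)) = det B * z i"
proof -
  have AB: "(\<Sum>\<rho><n. adj_mat B $$ (i, \<rho>) * B $$ (\<rho>, q)) = (if i = q then det B else 0)" if q: "q < n" for q
  proof -
    have "(adj_mat B * B) $$ (i, q) = (det B \<cdot>\<^sub>m 1\<^sub>m n) $$ (i, q)"
      using adj_mat(3)[OF B] by simp
    moreover have "(adj_mat B * B) $$ (i, q) = (\<Sum>\<rho><n. adj_mat B $$ (i, \<rho>) * B $$ (\<rho>, q))"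
      using i q adj_mat(1)[OF B] B by (simp add: scalar_prod_def atLeast0LessThan)
    ultimately show ?thesis using i q by simp
  qed
  have "(\<Sum>\<rho><n. adj_mat B $$ (i, \<rho>) * (\<Sum>q<n. B $$ (\<rho>, q) * z q))
      = (\<Sum>q<n. (\<Sum>\<rho><n. adj_mat B $$ (i, \<rho>) * B $$ (\<rho>, q)) * z q)"
    by (simp add: sum_distrib_left sum_distrib_right mult.assoc) (rule sum.swap)
  also have "\<dots> = (\<Sum>q<n. (if i = q then det B * z q else 0))"
    using i by (intro sum.cong) (auto simp: AB)
  also have "\<dots> = det B * z i" using i by simp
  finally show ?thesis .
qed

context core begin

lemma fixpoint:
  assumes t: "\<bar>t\<bar> \<le> \<tau>"
  shows "\<exists>y. ny y \<le> \<rho> \<and> (\<forall>b<r. T t y b = y b)"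
proof -
  define sq where "sq k = (T t ^^ k) (\<lambda>_. 0)" for k
  have sq_suc: "sq (Suc k) = T t (sq k)" for k unfolding sq_def by simp
  have inv: "ny (sq k) \<le> \<rho> * (1 - (1/2) ^ k) \<and> ny (\<lambda>b. sq (Suc k) b - sq k b) \<le> \<rho> / 2 * (1/2) ^ k" for k
  proof (induction k)
    case 0
    have "ny (\<lambda>b. sq (Suc 0) b - sq 0 b) = ny (T t (\<lambda>_. 0))" by (simp add: sq_def)
    then show ?case using T0_bound[OF t] by (simp add: sq_def ny_def)
  next
    case (Suc k)
    have h: "(1/2::real) ^ k \<ge> 0" "(1/2::real) ^ k \<le> 1" by (auto simp: power_le_one)
    have "ny (sq (Suc k)) \<le> ny (sq k) + ny (\<lambda>b. sq (Suc k) b - sq k b)" by (rule ny_triangle0)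
    also have "\<dots> \<le> \<rho> * (1 - (1/2) ^ k) + \<rho> / 2 * (1/2) ^ k" using Suc.IH by linarith
    also have "\<dots> = \<rho> * (1 - (1/2) ^ Suc k)" by (simp add: algebra_simps)
    finally have A: "ny (sq (Suc k)) \<le> \<rho> * (1 - (1/2) ^ Suc k)" .
    have le: "\<rho> * (1 - (1/2) ^ m) \<le> \<rho>" for m using rho_pos by (simp add: mult_le_cancel_left1)
    have "ny (\<lambda>b. sq (Suc (Suc k)) b - sq (Suc k) b) = ny (\<lambda>b. T t (sq (Suc k)) b - T t (sq k) b)"
      by (simp add: sq_suc)
    also have "\<dots> \<le> ny (\<lambda>b. sq (Suc k) b - sq k b) / 2"
    proof (rule contraction[OF _ _ t])
      show "ny (sq (Suc k)) \<le> \<rho>" using A le[of "Suc k"] by linarith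
      show "ny (sq k) \<le> \<rho>" using Suc.IH le[of k] by linarith
    qed
    also have "\<dots> \<le> \<rho> / 2 * (1/2) ^ Suc k" using Suc.IH by simp
    finally show ?case using A by simp
  qed
  have sqb: "ny (sq k) \<le> \<rho>" for k
  proof -
    have "\<rho> * (1 - (1/2) ^ k) \<le> \<rho>" using rho_pos by (simp add: mult_le_cancel_left1)
    then show ?thesis using inv[of k] by linarith
  qed
  have step: "\<bar>sq (Suc k) b - sq k b\<bar> \<le> \<rho> / 2 * (1/2) ^ k" if "b < r" for k b
    using ny_coord[OF that, of "\<lambda>b. sq (Suc k) b - sq k b"] inv[of k] by simp
  define ys where "ys b = suminf (\<lambda>k. sq (Suc k) b - sq k b)" for b
  have conv: "(\<lambda>n. sq n b) \<longlonglongrightarrow> ys b" if b: "b < r" for b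
  proof -
    have "summable (\<lambda>k. \<rho> / 2 * (1/2::real) ^ k)"
      by (intro summable_mult summable_geometric) simp
    then have "summable (\<lambda>k. sq (Suc k) b - sq k b)"
      by (rule summable_comparison_test[rotated]) (use step[OF b] in auto)
    then have "(\<lambda>n. \<Sum>k<n. sq (Suc k) b - sq k b) \<longlonglongrightarrow> ys b"
      unfolding ys_def by (rule summable_LIMSEQ)
    moreover have "(\<Sum>k<n. sq (Suc k) b - sq k b) = sq n b" for n
      by (subst sum_lessThan_telescope) (simp add: sq_def)
    ultimately show ?thesis by simp
  qed
  have lim0: "(\<lambda>n. ny (\<lambda>b. sq n b - ys b)) \<longlonglongrightarrow> 0"
  proof -
    have "(\<lambda>n. \<Sum>b<r. \<bar>sq n b - ys b\<bar>) \<longlonglongrightarrow> (\<Sum>b<r. \<bar>ys b - ys b\<bar>)"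
      by (intro tendsto_sum tendsto_rabs tendsto_diff conv) auto
    then show ?thesis unfolding ny_def by simp
  qed
  have ysb: "ny ys \<le> \<rho>"
  proof -
    have "(\<lambda>n. ny (sq n)) \<longlonglongrightarrow> ny ys"
      unfolding ny_def by (intro tendsto_sum tendsto_rabs conv) auto
    then show ?thesis by (rule LIMSEQ_le_const2) (use sqb in auto)
  qed
  have fx: "ny (\<lambda>b. T t ys b - ys b) \<le> 0"
  proof (rule LIMSEQ_le_const)
    show "(\<lambda>n. ny (\<lambda>b. sq n b - ys b) / 2 + ny (\<lambda>b. sq (Suc n) b - ys b)) \<longlonglongrightarrow> 0"
      using tendsto_add[OF tendsto_divide[OF lim0 tendsto_const[of 2]] LIMSEQ_Suc[OF lim0]] by simp
    show "\<exists>N. \<forall>n\<ge>N. ny (\<lambda>b. T t ys b - ys b) \<le> ny (\<lambda>b. sq n b - ys b) / 2 + ny (\<lambda>b. sq (Suc n) b - ys b)"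
    proof (intro exI allI impI)
      fix n
      have "ny (\<lambda>b. T t ys b - ys b) \<le> ny (\<lambda>b. T t ys b - sq (Suc n) b) + ny (\<lambda>b. sq (Suc n) b - ys b)"
        by (rule ny_triangle)
      also have "ny (\<lambda>b. T t ys b - sq (Suc n) b) = ny (\<lambda>b. T t ys b - T t (sq n) b)" by (simp add: sq_suc)
      also have "\<dots> \<le> ny (\<lambda>b. ys b - sq n b) / 2" by (rule contraction[OF ysb sqb t])
      also have "ny (\<lambda>b. ys b - sq n b) = ny (\<lambda>b. sq n b - ys b)"
        unfolding ny_def by (simp add: abs_minus_commute)
      finally show "ny (\<lambda>b. T t ys b - ys b) \<le> ny (\<lambda>b. sq n b - ys b) / 2 + ny (\<lambda>b. sq (Suc n) b - ys b)"
        by simp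
    qed
  qed
  have "\<forall>b<r. T t ys b = ys b"
  proof (intro allI impI)
    fix b assume "b < r"
    then have "\<bar>T t ys b - ys b\<bar> \<le> 0" using ny_coord[of b "\<lambda>b. T t ys b - ys b"] fx by simp
    then show "T t ys b = ys b" by simp
  qed
  then show ?thesis using ysb by blast
qed

lemma fix_G:
  assumes fx: "\<forall>b<r. T t y b = y b" and a: "a < r"
  shows "G a y t = 0"
proof -
  have z: "(\<Sum>a'<r. A $$ (b, a') * G a' y t) = 0" if "b < r" for b
    using fx that D0_nz unfolding T_def by (auto simp: fun_eq_iff)
  have "D0 * G a y t = (\<Sum>b<r. J0 $$ (a, b) * (\<Sum>a'<r. A $$ (b, a') * G a' y t))"
    using J0_apply_adj[OF a, of "\<lambda>a'. G a' y t"] by simp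
  also have "\<dots> = 0" by (rule sum.neutral) (simp add: z)
  finally show ?thesis using D0_nz by simp
qed

lemma two_fix:
  assumes y: "ny y \<le> \<rho>" "ny y' \<le> \<rho>" and t: "\<bar>t\<bar> \<le> \<tau>" "\<bar>t'\<bar> \<le> \<tau>"
    and fy: "\<forall>b<r. T t y b = y b" and fy': "\<forall>b<r. T t' y' b = y' b"
  shows "ny (\<lambda>b. y b - y' b) \<le> 2 * \<alpha> * K * \<bar>t - t'\<bar>"
proof -
  have "ny (\<lambda>b. y b - y' b) = ny (\<lambda>b. T t y b - T t' y' b)"
    by (rule ny_cong) (simp add: fy fy')
  also have "\<dots> \<le> ny (\<lambda>b. T t y b - T t y' b) + ny (\<lambda>b. T t y' b - T t' y' b)" by (rule ny_triangle)
  also have "\<dots> \<le> ny (\<lambda>b. y b - y' b) / 2 + \<alpha> * K * \<bar>t - t'\<bar>"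
    using contraction[OF y t(1)] T_t_lip[OF y(2) t] by linarith
  finally show ?thesis by simp
qed

definition "ys t = (SOME y. ny y \<le> \<rho> \<and> (\<forall>b<r. T t y b = y b))"
definition "xc t = X (ys t) t"

lemma ys: assumes "\<bar>t\<bar> \<le> \<tau>" shows "ny (ys t) \<le> \<rho> \<and> (\<forall>b<r. T t (ys t) b = ys t b)"
  unfolding ys_def using fixpoint[OF assms] by (rule someI_ex)

lemma xc_in: "xc t \<in> PiE P (\<lambda>_. UNIV)" unfolding xc_def by (rule X_in)

lemma xc_Rl: "\<bar>t\<bar> \<le> \<tau> \<Longrightarrow> a < r \<Longrightarrow> ev (e (Rl ! a)) (xc t) = ev (e (Rl ! a)) \<theta>"
  using fix_G[of t "ys t" a] ys[of t] unfolding G_def xc_def by simp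

definition "Lx = 2 * \<alpha> * K + 1"

lemma Lx_pos: "Lx \<ge> 1" unfolding Lx_def using alpha_nonneg K1 by simp

lemma xc_dst: "\<bar>s\<bar> \<le> \<tau> \<Longrightarrow> \<bar>t\<bar> \<le> \<tau> \<Longrightarrow> dst P (xc s) (xc t) \<le> Lx * \<bar>s - t\<bar>"
  using two_fix[of "ys s" "ys t" s t] ys[of s] ys[of t] unfolding xc_def dst_X Lx_def
  by (simp add: algebra_simps)

lemma xc_close: "\<bar>t\<bar> \<le> \<tau> \<Longrightarrow> dst P (xc t) \<theta> \<le> 1"
  unfolding xc_def using ys close1 by blast

lemma xc_close': "\<bar>t\<bar> \<le> \<tau> \<Longrightarrow> dst P (xc t) \<theta> \<le> \<rho> + \<tau>"
  unfolding xc_def using ys close by blast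

lemma X_cong: "(\<And>b. b < r \<Longrightarrow> y b = y' b) \<Longrightarrow> X y t = X y' t"
  unfolding X_def W_def by (auto simp: fun_eq_iff intro!: sum.cong)

lemma xc0: "xc 0 = \<theta>"
proof -
  have fz: "\<forall>b<r. T 0 (\<lambda>_. 0) b = 0"
  proof (intro allI impI)
    fix b
    have "G a (\<lambda>_. 0) 0 = 0" for a unfolding G_def X0 by simp
    then show "T 0 (\<lambda>_. 0) b = 0" unfolding T_def by simp
  qed
  have "ny (\<lambda>b. ys 0 b - 0) \<le> 2 * \<alpha> * K * \<bar>0 - 0\<bar>"
    by (rule two_fix) (use ys[of 0] fz rho_pos tau_pos in \<open>auto simp: ny_def\<close>)
  then have "ys 0 b = 0" if "b < r" for b using ny_coord[OF that, of "ys 0"] by simp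
  then have "X (ys 0) 0 = X (\<lambda>_. 0) 0" by (intro X_cong) auto
  then show ?thesis unfolding xc_def X0 .
qed

lemma xc_j: "xc t j = \<theta> j + t"
proof -
  have "(\<Sum>b<r. if Cl ! b = j then ys t b else 0) = 0"
    by (rule sum.neutral) (use jC Cl(3) nth_mem in force)
  then show ?thesis unfolding xc_def X_def W_def using jP by simp
qed

end

context core begin

lemma mat_delete_Bm: "mat_delete (Bm i x) r r = mat r r (\<lambda>(a, b). ev (dv (Cl ! b) (e (Rl ! a))) x)"
  by (rule eq_matI) (auto simp: mat_delete_def Bm_def nth_append Cl(3))

lemma adj_rr: "adj_mat (Bm i x) $$ (r, r) = minor e Rl Cl x"
  using adj_Bm[of r i x] by (simp add: mat_delete_Bm minor_def)

lemma V_eq: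
  assumes k: "k < Suc r"
  shows "(\<Sum>q<Suc r. Bm i (xc t) $$ (k, q) * (if q < r then ys s q - ys t q else s - t))
    = Dv P (e ((Rl @ [i]) ! k)) (xc t) (\<lambda>p. xc s p - xc t p)"
proof -
  have "(\<Sum>q<Suc r. Bm i (xc t) $$ (k, q) * (if q < r then ys s q - ys t q else s - t))
      = (\<Sum>q<r. Bm i (xc t) $$ (k, q) * (ys s q - ys t q)) + Bm i (xc t) $$ (k, r) * (s - t)"
    by (simp add: sum.lessThan_Suc)
  also have "(\<Sum>q<r. Bm i (xc t) $$ (k, q) * (ys s q - ys t q))
      = (\<Sum>q<r. ev (dv (Cl ! q) (e ((Rl @ [i]) ! k))) (xc t) * (ys s q - ys t q))"
    using k by (intro sum.cong) (auto simp: Bm_def nth_append Cl(3))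
  also have "Bm i (xc t) $$ (k, r) = ev (dv j (e ((Rl @ [i]) ! k))) (xc t)"
    using k by (simp add: Bm_def nth_append Cl(3))
  finally show ?thesis unfolding xc_def Dv_X by simp
qed

definition "Cq = (2 * real r * K\<^sup>2 / \<bar>D0\<bar> + K) * Lx\<^sup>2"

lemma other:
  assumes i: "i \<in> I" "i \<notin> set Rl" and s: "\<bar>s\<bar> \<le> \<tau>" and t: "\<bar>t\<bar> \<le> \<tau>"
  shows "\<bar>ev (e i) (xc s) - ev (e i) (xc t)\<bar> \<le> Cq * (s - t)\<^sup>2"
proof -
  define a where "a = xc t"
  define B where "B = Bm i a"
  define d where "d = dst P (xc s) (xc t)"
  define z where "z q = (if q < r then ys s q - ys t q else s - t)" for q
  define V where "V k = (\<Sum>q<Suc r. B $$ (k, q) * z q)" for k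
  have d0: "d \<ge> 0" unfolding d_def by (rule dst_nonneg)
  have ca: "dst P a \<theta> \<le> 1" "dst P (xc s) \<theta> \<le> 1" using xc_close s t unfolding a_def by auto
  have detB: "det B = 0" using maxl[OF i xc_in] unfolding B_def a_def minor_Bm .
  have "(\<Sum>k<Suc r. adj_mat B $$ (r, k) * V k) = det B * z r"
    unfolding V_def B_def by (rule adj_apply_gen[OF Bm_carrier]) simp
  then have sum0: "(\<Sum>k<r. adj_mat B $$ (r, k) * V k) + adj_mat B $$ (r, r) * V r = 0"
    using detB by (simp add: sum.lessThan_Suc)
  have VD: "V k = Dv P (e ((Rl @ [i]) ! k)) a (\<lambda>p. xc s p - a p)" if "k < Suc r" for k
    using V_eq[OF that, of i t s] unfolding V_def B_def z_def a_def .
  have Vsmall: "\<bar>V k\<bar> \<le> K * d\<^sup>2" if k: "k < r" for k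
  proof -
    have eq: "(Rl @ [i]) ! k = Rl ! k" using k by (simp add: nth_append)
    have "\<bar>ev (e (Rl ! k)) (xc s) - ev (e (Rl ! k)) a - Dv P (e (Rl ! k)) a (\<lambda>p. xc s p - a p)\<bar> \<le> K * d\<^sup>2"
      using tayE(3)[OF tay_e[OF Rl_I[OF k]] ca] unfolding d_def a_def .
    moreover have "ev (e (Rl ! k)) (xc s) = ev (e (Rl ! k)) a"
      unfolding a_def using xc_Rl[OF s k] xc_Rl[OF t k] by simp
    ultimately show ?thesis using VD[of k] k eq by simp
  qed
  have adjb: "\<bar>adj_mat B $$ (r, k)\<bar> \<le> K" if k: "k < r" for k
  proof -
    have "adj_mat B $$ (r, k) = ev (cf i k) a"
      using cf[OF i(1), of k] k unfolding B_def by (metis less_SucI)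
    moreover have "\<bar>ev (cf i k) a\<bar> \<le> K"
      using tayE(1)[OF tay_cf[OF i(1)] th_close ca(1)] k by simp
    ultimately show ?thesis by simp
  qed
  have S: "\<bar>\<Sum>k<r. adj_mat B $$ (r, k) * V k\<bar> \<le> real r * K * (K * d\<^sup>2)"
  proof -
    have "\<bar>\<Sum>k<r. adj_mat B $$ (r, k) * V k\<bar> \<le> (\<Sum>k<r. \<bar>adj_mat B $$ (r, k) * V k\<bar>)"
      by (rule sum_abs)
    also have "\<dots> \<le> (\<Sum>k<r. K * (K * d\<^sup>2))"
    proof (rule sum_mono)
      fix k assume "k \<in> {..<r}"
      then have k: "k < r" by simp
      show "\<bar>adj_mat B $$ (r, k) * V k\<bar> \<le> K * (K * d\<^sup>2)"
        unfolding abs_mult using adjb[OF k] Vsmall[OF k] K1 by (intro mult_mono) auto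
    qed
    also have "\<dots> = real r * K * (K * d\<^sup>2)" by simp
    finally show ?thesis .
  qed
  have rr: "adj_mat B $$ (r, r) = ev ef a" using adj_rr[of i a] ef unfolding B_def by simp
  have "\<bar>ev ef a - ev ef \<theta>\<bar> \<le> K * dst P a \<theta>" using tayE(2)[OF tay_ef th_close ca(1)] .
  also have "\<dots> \<le> K * (\<rho> + \<tau>)" using xc_close'[OF t] K1 unfolding a_def by simp
  also have "\<dots> \<le> \<bar>D0\<bar> / 8" by (rule f4)
  finally have "\<bar>ev ef a - D0\<bar> \<le> \<bar>D0\<bar> / 8" using ef D0_minor by simp
  then have big: "\<bar>adj_mat B $$ (r, r)\<bar> \<ge> \<bar>D0\<bar> / 2" unfolding rr by linarith
  have "\<bar>adj_mat B $$ (r, r)\<bar> * \<bar>V r\<bar> \<le> real r * K * (K * d\<^sup>2)"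
    using sum0 S by (simp add: abs_mult[symmetric] eq_neg_iff_add_eq_0[symmetric] add.commute)
  then have "\<bar>D0\<bar> / 2 * \<bar>V r\<bar> \<le> real r * K * (K * d\<^sup>2)"
    using big by (smt (verit) abs_ge_zero mult_right_mono)
  then have Vr: "\<bar>V r\<bar> \<le> 2 * real r * K\<^sup>2 / \<bar>D0\<bar> * d\<^sup>2"
    using D0_nz by (simp add: field_simps power2_eq_square)
  have Vr_eq: "V r = Dv P (e i) a (\<lambda>p. xc s p - a p)" using VD[of r] by (simp add: nth_append)
  have "\<bar>ev (e i) (xc s) - ev (e i) a - V r\<bar> \<le> K * d\<^sup>2"
    using tayE(3)[OF tay_e[OF i(1)] ca] unfolding d_def a_def Vr_eq a_def .
  then have "\<bar>ev (e i) (xc s) - ev (e i) a\<bar> \<le> 2 * real r * K\<^sup>2 / \<bar>D0\<bar> * d\<^sup>2 + K * d\<^sup>2"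
    using Vr by linarith
  also have "\<dots> = (2 * real r * K\<^sup>2 / \<bar>D0\<bar> + K) * d\<^sup>2" by (simp add: algebra_simps)
  also have "\<dots> \<le> (2 * real r * K\<^sup>2 / \<bar>D0\<bar> + K) * (Lx * \<bar>s - t\<bar>)\<^sup>2"
    using xc_dst[OF s t] d0 K1 unfolding d_def
    by (intro mult_left_mono power_mono) auto
  also have "\<dots> = Cq * (s - t)\<^sup>2" unfolding Cq_def by (simp add: power_mult_distrib)
  finally show ?thesis unfolding a_def .
qed

lemma const_other:
  assumes i: "i \<in> I" "i \<notin> set Rl" and t: "\<bar>t\<bar> \<le> \<tau>"
  shows "ev (e i) (xc t) = ev (e i) \<theta>"
proof -
  have C: "\<bar>ev (e i) (xc s) - ev (e i) (xc t')\<bar> \<le> Cq * (s - t')\<^sup>2"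
    if "s \<in> {-\<tau>..\<tau>}" "t' \<in> {-\<tau>..\<tau>}" for s t'
    using other[OF i, of s t'] that by auto
  have "ev (e i) (xc t) = ev (e i) (xc (-\<tau>))"
    by (rule const_quadratic[where g = "\<lambda>t. ev (e i) (xc t)", OF C]) (use t in auto)
  moreover have "ev (e i) (xc 0) = ev (e i) (xc (-\<tau>))"
    by (rule const_quadratic[where g = "\<lambda>t. ev (e i) (xc t)", OF C]) (use tau_pos in auto)
  ultimately show ?thesis using xc0 by simp
qed

theorem core_infinite: "infinite {\<theta>' \<in> PiE P (\<lambda>_. UNIV). \<forall>i\<in>I. ev (e i) \<theta>' = ev (e i) \<theta>}"
proof -
  have sub: "xc ` {-\<tau>..\<tau>} \<subseteq> {\<theta>' \<in> PiE P (\<lambda>_. UNIV). \<forall>i\<in>I. ev (e i) \<theta>' = ev (e i) \<theta>}"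
  proof (rule image_subsetI)
    fix t assume "t \<in> {-\<tau>..\<tau>}"
    then have t: "\<bar>t\<bar> \<le> \<tau>" by auto
    have "ev (e i) (xc t) = ev (e i) \<theta>" if i: "i \<in> I" for i
    proof (cases "i \<in> set Rl")
      case True
      then obtain a where "a < r" "i = Rl ! a" by (auto simp: in_set_conv_nth)
      then show ?thesis using xc_Rl[OF t] by simp
    next
      case False
      then show ?thesis using const_other[OF i False t] by simp
    qed
    then show "xc t \<in> {\<theta>' \<in> PiE P (\<lambda>_. UNIV). \<forall>i\<in>I. ev (e i) \<theta>' = ev (e i) \<theta>}"
      using xc_in by auto
  qed
  have inj: "inj_on xc {-\<tau>..\<tau>}"
    by (rule inj_onI) (metis add_left_cancel xc_j)
  have "infinite {-\<tau>..\<tau>}" using tau_pos by simp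
  then have "infinite (xc ` {-\<tau>..\<tau>})" using finite_imageD[OF _ inj] by blast
  then show ?thesis using sub infinite_super by blast
qed

end

lemma minor_nil: "minor e [] [] x = 1"
proof -
  have "mat 0 0 (\<lambda>(a, b). ev (dv ([] ! b) (e ([] ! a))) x) = (1\<^sub>m 0 :: real mat)"
    by (rule eq_matI) auto
  then show ?thesis unfolding minor_def by simp
qed

theorem generic_infinite:
  fixes c :: "'i \<Rightarrow> (param \<Rightarrow> real) \<Rightarrow> real" and P :: "param set" and I :: "'i set"
  assumes finP: "finite P" and finI: "finite I" and card: "card I < card P"
    and pc: "\<And>i. i \<in> I \<Longrightarrow> poly_fun P (c i)"
  shows "\<exists>f. poly_fun P f \<and> (\<exists>\<theta>\<in>PiE P (\<lambda>_. UNIV). f \<theta> \<noteq> 0) \<and>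
     (\<forall>\<theta>\<in>PiE P (\<lambda>_. UNIV). f \<theta> \<noteq> 0 \<longrightarrow>
        infinite {\<theta>' \<in> PiE P (\<lambda>_. UNIV). \<forall>i\<in>I. c i \<theta>' = c i \<theta>})"
proof -
  define e where "e i = (SOME ex. vars ex \<subseteq> P \<and> c i = ev ex)" for i
  have e: "vars (e i) \<subseteq> P \<and> c i = ev (e i)" if "i \<in> I" for i
    unfolding e_def by (rule someI_ex) (rule poly_fun_ex[OF pc[OF that]])
  define ok where "ok Rl Cl x \<longleftrightarrow> distinct Rl \<and> set Rl \<subseteq> I \<and> distinct Cl \<and> set Cl \<subseteq> P \<and>
      length Cl = length Rl \<and> x \<in> PiE P (\<lambda>_. UNIV) \<and> minor e Rl Cl x \<noteq> 0" for Rl Cl x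
  define Good where "Good = {length Rl | Rl. \<exists>Cl x. ok Rl Cl x}"
  have Gsub: "Good \<subseteq> {..card I}"
  proof
    fix k assume "k \<in> Good"
    then obtain Rl Cl x where k: "k = length Rl" and o: "ok Rl Cl x" unfolding Good_def by blast
    have "length Rl = card (set Rl)" using o distinct_card unfolding ok_def by metis
    also have "\<dots> \<le> card I" using o finI unfolding ok_def by (intro card_mono) auto
    finally show "k \<in> {..card I}" using k by simp
  qed
  then have Gfin: "finite Good" by (rule finite_subset) simp
  define x00 :: "param \<Rightarrow> real" where "x00 = (\<lambda>p. if p \<in> P then 0 else undefined)"
  have "ok [] [] x00" unfolding ok_def x00_def by (auto simp: minor_nil)
  then have "0 \<in> Good" unfolding Good_def by force
  then have Gne: "Good \<noteq> {}" by blast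
  define r where "r = Max Good"
  have "r \<in> Good" unfolding r_def using Gfin Gne by (rule Max_in)
  then obtain Rl Cl x0 where rl: "r = length Rl" and o: "ok Rl Cl x0" unfolding Good_def by blast
  have "r \<le> card I" using Gsub \<open>r \<in> Good\<close> by auto
  moreover have "card (set Cl) = length Cl" using o distinct_card unfolding ok_def by metis
  ultimately have "card (set Cl) < card P" using o card rl unfolding ok_def by linarith
  then have "\<not> P \<subseteq> set Cl" using finP by (metis card_mono leD List.finite_set)
  then obtain j where jP: "j \<in> P" and jC: "j \<notin> set Cl" by blast
  have maxl: "minor e (Rl @ [i]) (Cl @ [j]) x = 0"
    if "i \<in> I" "i \<notin> set Rl" "x \<in> PiE P (\<lambda>_. UNIV)" for i x
  proof (rule ccontr)
    assume "minor e (Rl @ [i]) (Cl @ [j]) x \<noteq> 0"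
    then have "ok (Rl @ [i]) (Cl @ [j]) x" using o that jP jC unfolding ok_def by auto
    then have "length (Rl @ [i]) \<in> Good" unfolding Good_def by blast
    then have "length (Rl @ [i]) \<le> r" unfolding r_def using Gfin by simp
    then show False using rl by simp
  qed
  have core: "core P I e Rl Cl j \<theta>" if "\<theta> \<in> PiE P (\<lambda>_. UNIV)" "minor e Rl Cl \<theta> \<noteq> 0" for \<theta>
    by unfold_locales (use finP finI e o jP jC that maxl in \<open>auto simp: ok_def\<close>)
  show ?thesis
  proof (intro exI conjI ballI impI)
    show "poly_fun P (minor e Rl Cl)"
      using core.pf_minor[OF core[of x0]] o unfolding ok_def by blast
    show "\<exists>\<theta>\<in>PiE P (\<lambda>_. UNIV). minor e Rl Cl \<theta> \<noteq> 0" using o unfolding ok_def by blast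
    fix \<theta> assume th: "\<theta> \<in> PiE P (\<lambda>_. UNIV)" and f: "minor e Rl Cl \<theta> \<noteq> 0"
    have "{\<theta>' \<in> PiE P (\<lambda>_. UNIV). \<forall>i\<in>I. c i \<theta>' = c i \<theta>}
        = {\<theta>' \<in> PiE P (\<lambda>_. UNIV). \<forall>i\<in>I. ev (e i) \<theta>' = ev (e i) \<theta>}"
      using e by auto
    then show "infinite {\<theta>' \<in> PiE P (\<lambda>_. UNIV). \<forall>i\<in>I. c i \<theta>' = c i \<theta>}"
      using core.core_infinite[OF core[OF th f]] by simp
  qed
qed

section \<open>Polynomial coefficients of determinants\<close>

definition pcf :: "param set \<Rightarrow> ((param \<Rightarrow> real) \<Rightarrow> real poly) \<Rightarrow> bool" where
  "pcf P F \<longleftrightarrow> (\<forall>k. poly_fun P (\<lambda>\<theta>. coeff (F \<theta>) k))"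

lemma pcf_const: "pcf P (\<lambda>\<theta>. p)"
  unfolding pcf_def by (auto intro: pf_const)

lemma pcf_add: "pcf P F \<Longrightarrow> pcf P G \<Longrightarrow> pcf P (\<lambda>\<theta>. F \<theta> + G \<theta>)"
  unfolding pcf_def by (auto intro: pf_add)

lemma pcf_mult: "pcf P F \<Longrightarrow> pcf P G \<Longrightarrow> pcf P (\<lambda>\<theta>. F \<theta> * G \<theta>)"
  unfolding pcf_def coeff_mult
  by (auto intro!: poly_fun_sum pf_mult)

lemma pcf_sum: "finite S \<Longrightarrow> (\<And>s. s \<in> S \<Longrightarrow> pcf P (F s)) \<Longrightarrow> pcf P (\<lambda>\<theta>. \<Sum>s\<in>S. F s \<theta>)"
  by (induction S rule: finite_induct) (auto intro!: pcf_add pcf_const)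

lemma pcf_prod: "finite S \<Longrightarrow> (\<And>s. s \<in> S \<Longrightarrow> pcf P (F s)) \<Longrightarrow> pcf P (\<lambda>\<theta>. \<Prod>s\<in>S. F s \<theta>)"
  by (induction S rule: finite_induct) (auto intro: pcf_mult pcf_const)

lemma pcf_det:
  assumes "\<And>i j. i < n \<Longrightarrow> j < n \<Longrightarrow> pcf P (\<lambda>\<theta>. M \<theta> $$ (i, j))"
    and "\<And>\<theta>. M \<theta> \<in> carrier_mat n n"
  shows "pcf P (\<lambda>\<theta>. det (M \<theta>))"
proof -
  have "pcf P (\<lambda>\<theta>. \<Sum>p\<in>{p. p permutes {0..<n}}. signof p * (\<Prod>i = 0..<n. M \<theta> $$ (i, p i)))"
    by (intro pcf_sum pcf_mult pcf_const pcf_prod assms)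
       (auto simp: finite_permutations permutes_in_image)
  then show ?thesis using det_def'[OF assms(2)] by simp
qed

lemma pcf_coeff: "pcf P F \<Longrightarrow> poly_fun P (\<lambda>\<theta>. coeff (F \<theta>) k)"
  unfolding pcf_def by blast

section \<open>The model\<close>

lemma labels_finite: "finite E \<Longrightarrow> finite Lk \<Longrightarrow> finite (param_labels E Lk)"
  unfolding param_labels_def by auto

lemma labels_card: "finite E \<Longrightarrow> finite Lk \<Longrightarrow> card (param_labels E Lk) = card E + card Lk"
proof -
  assume fE: "finite E" and fL: "finite Lk"
  have "card ((\<lambda>(k, l). EdgeP k l) ` E) = card E"
    by (rule card_image) (auto simp: inj_on_def)
  moreover have "card (LeakP ` Lk) = card Lk" by (rule card_image) (auto simp: inj_on_def)
  moreover have "(\<lambda>(k, l). EdgeP k l) ` E \<inter> LeakP ` Lk = {}" by auto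
  ultimately show ?thesis unfolding param_labels_def
    by (subst card_Un_disjoint) (use fE fL in auto)
qed

lemma poly_fun_if: "poly_fun P f \<Longrightarrow> poly_fun P g \<Longrightarrow> poly_fun P (\<lambda>\<theta>. if b then f \<theta> else g \<theta>)"
  by (cases b) auto

lemma pf_comp:
  assumes fE: "finite E" and rc: "r < n" "c < n"
  shows "poly_fun (param_labels E Lk) (\<lambda>\<theta>. comp_matrix n E Lk \<theta> $$ (r, c))"
proof -
  let ?P = "param_labels E Lk"
  have sub: "{m. (Suc r, m) \<in> E} \<subseteq> snd ` E" by force
  have fin: "finite {m. (Suc r, m) \<in> E}" by (rule finite_subset[OF sub]) (use fE in auto)
  have e1: "poly_fun ?P (\<lambda>\<theta>. \<Sum>m\<in>{m. (Suc r, m) \<in> E}. \<theta> (EdgeP (Suc r) m))"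
    by (rule poly_fun_sum[OF fin]) (auto intro!: pf_var simp: param_labels_def)
  have e2: "poly_fun ?P (\<lambda>\<theta>. if Suc r \<in> Lk then \<theta> (LeakP (Suc r)) else 0)"
    by (cases "Suc r \<in> Lk") (auto intro!: pf_var pf_const simp: param_labels_def)
  have e3: "poly_fun ?P (\<lambda>\<theta>. if (Suc c, Suc r) \<in> E then \<theta> (EdgeP (Suc c) (Suc r)) else 0)"
    by (cases "(Suc c, Suc r) \<in> E") (auto intro!: pf_var pf_const simp: param_labels_def image_iff)
  have "poly_fun ?P (\<lambda>\<theta>. if r = c then - (\<Sum>m\<in>{m. (Suc r, m) \<in> E}. \<theta> (EdgeP (Suc r) m))
                   - (if Suc r \<in> Lk then \<theta> (LeakP (Suc r)) else 0)
     else if (Suc c, Suc r) \<in> E then \<theta> (EdgeP (Suc c) (Suc r)) else 0)"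
    by (rule poly_fun_if[OF poly_fun_diff[OF poly_fun_neg[OF e1] e2] e3])
  then show ?thesis using rc unfolding comp_matrix_def by (simp add: Let_def)
qed

lemma pcf_pconst: "poly_fun P f \<Longrightarrow> pcf P (\<lambda>\<theta>. [: f \<theta> :])"
  unfolding pcf_def
proof
  fix k assume "poly_fun P f"
  then show "poly_fun P (\<lambda>\<theta>. coeff [:f \<theta>:] k)"
    by (cases k) (auto intro: pf_const)
qed

lemma dI_entry: "r < n \<Longrightarrow> c < n \<Longrightarrow> dI_minus_A n E Lk \<theta> $$ (r, c)
   = (if r = c then [:0, 1:] else 0) + [: - comp_matrix n E Lk \<theta> $$ (r, c) :]"
  unfolding dI_minus_A_def by simp

lemma dI_carrier: "dI_minus_A n E Lk \<theta> \<in> carrier_mat n n"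
  unfolding dI_minus_A_def by simp

lemma pcf_dI: "finite E \<Longrightarrow> r < n \<Longrightarrow> c < n \<Longrightarrow> pcf (param_labels E Lk) (\<lambda>\<theta>. dI_minus_A n E Lk \<theta> $$ (r, c))"
  unfolding dI_entry by (intro pcf_add pcf_const pcf_pconst poly_fun_neg pf_comp)

lemma pcf_det_dI: "finite E \<Longrightarrow> pcf (param_labels E Lk) (\<lambda>\<theta>. det (dI_minus_A n E Lk \<theta>))"
  by (rule pcf_det[where n = n]) (auto intro: pcf_dI dI_carrier)

lemma pcf_det_del: "finite E \<Longrightarrow> pcf (param_labels E Lk) (\<lambda>\<theta>. det (mat_delete (dI_minus_A n E Lk \<theta>) a b))"
proof (rule pcf_det[where n = "n - 1"])
  fix \<theta> show "mat_delete (dI_minus_A n E Lk \<theta>) a b \<in> carrier_mat (n - 1) (n - 1)"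
    using mat_delete_carrier[OF dI_carrier] .
next
  fix r c assume fE: "finite E" and rc: "r < n - 1" "c < n - 1"
  define r' where "r' = (if r < a then r else Suc r)"
  define c' where "c' = (if c < b then c else Suc c)"
  have "r' < n" "c' < n" using rc unfolding r'_def c'_def by auto
  moreover have "(\<lambda>\<theta>. mat_delete (dI_minus_A n E Lk \<theta>) a b $$ (r, c)) = (\<lambda>\<theta>. dI_minus_A n E Lk \<theta> $$ (r', c'))"
    using rc unfolding mat_delete_def r'_def c'_def by (simp add: dI_carrier[THEN carrier_matD(1)] dI_carrier[THEN carrier_matD(2)])
  ultimately show "pcf (param_labels E Lk) (\<lambda>\<theta>. mat_delete (dI_minus_A n E Lk \<theta>) a b $$ (r, c))"
    using pcf_dI[OF fE] by simp
qed

lemma pf_io: "finite E \<Longrightarrow> poly_fun (param_labels E Lk) (io_coeff n E Lk idx)"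
proof -
  assume fE: "finite E"
  obtain i jo k where idx: "idx = (i, jo, k)" by (cases idx) auto
  show ?thesis
  proof (cases jo)
    case None
    then show ?thesis unfolding idx io_coeff_def[abs_def]
      using pcf_coeff[OF pcf_det_dI[OF fE]] by simp
  next
    case (Some j)
    have "pcf (param_labels E Lk) (\<lambda>\<theta>. (-1) ^ (i + j) * det (mat_delete (dI_minus_A n E Lk \<theta>) (j - 1) (i - 1)))"
      by (intro pcf_mult pcf_const pcf_det_del fE)
    then show ?thesis unfolding idx io_coeff_def[abs_def] Some using pcf_coeff by simp
  qed
qed

lemma dI_char: "dI_minus_A n E Lk \<theta> = char_poly_matrix (comp_matrix n E Lk \<theta>)"
  by (rule eq_matI) (auto simp: dI_minus_A_def char_poly_matrix_def comp_matrix_def)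

lemma comp_carrier: "comp_matrix n E Lk \<theta> \<in> carrier_mat n n"
  unfolding comp_matrix_def by simp

lemma det_dI_coeff: "coeff (det (dI_minus_A n E Lk \<theta>)) n = 1" "k > n \<Longrightarrow> coeff (det (dI_minus_A n E Lk \<theta>)) k = 0"
  using degree_monic_char_poly[OF comp_carrier, of n E Lk \<theta>]
  unfolding dI_char char_poly_def by (auto intro: coeff_eq_0)

lemma del_char: "A \<in> carrier_mat n n \<Longrightarrow> a < n \<Longrightarrow> mat_delete (char_poly_matrix A) a a = char_poly_matrix (mat_delete A a a)"
  by (rule eq_matI) (auto simp: mat_delete_def char_poly_matrix_def)

lemma det_del_coeff:
  assumes a: "a < n"
  shows "coeff (det (mat_delete (dI_minus_A n E Lk \<theta>) a a)) (n - 1) = 1"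
    "k > n - 1 \<Longrightarrow> coeff (det (mat_delete (dI_minus_A n E Lk \<theta>) a a)) k = 0"
proof -
  have c: "mat_delete (comp_matrix n E Lk \<theta>) a a \<in> carrier_mat (n - 1) (n - 1)"
    using mat_delete_carrier[OF comp_carrier] .
  have eq: "det (mat_delete (dI_minus_A n E Lk \<theta>) a a) = char_poly (mat_delete (comp_matrix n E Lk \<theta>) a a)"
    unfolding dI_char char_poly_def using del_char[OF comp_carrier a] by simp
  show "coeff (det (mat_delete (dI_minus_A n E Lk \<theta>) a a)) (n - 1) = 1"
    "k > n - 1 \<Longrightarrow> coeff (det (mat_delete (dI_minus_A n E Lk \<theta>) a a)) k = 0"
    using degree_monic_char_poly[OF c] unfolding eq by (auto intro: coeff_eq_0)
qed

lemma perm_cycle: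
  fixes \<sigma> :: "nat \<Rightarrow> nat" and n a b :: nat
  assumes \<sigma>: "\<sigma> permutes {0..<n}" and ab: "a < n" "b < n" "a \<noteq> b" "\<sigma> a = b"
  shows "\<exists>p. p \<ge> 1 \<and> (\<sigma> ^^ p) b = a \<and> inj_on (\<lambda>m. (\<sigma> ^^ m) b) {0..p} \<and> (\<forall>m<p. (\<sigma> ^^ m) b \<noteq> a)"
proof -
  define c where "c m = (\<sigma> ^^ m) b" for m
  have injf: "inj (\<sigma> ^^ m)" for m using bij_fn[OF permutes_bij[OF \<sigma>]] bij_is_inj by blast
  have cin: "c m < n" for m
  proof (induction m)
    case 0 then show ?case using ab by (simp add: c_def)
  next
    case (Suc m)
    then have "\<sigma> (c m) \<in> {0..<n}" using permutes_in_image[OF \<sigma>] by simp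
    then show ?case by (simp add: c_def)
  qed
  have "\<not> inj_on c {0..n}"
  proof
    assume "inj_on c {0..n}"
    then have "card (c ` {0..n}) = Suc n" by (simp add: card_image)
    moreover have "c ` {0..n} \<subseteq> {0..<n}" using cin by auto
    then have "card (c ` {0..n}) \<le> n" using card_mono[of "{0..<n}"] by fastforce
    ultimately show False by simp
  qed
  then obtain x y where xy: "x < y" "c x = c y"
    unfolding inj_on_def by (metis linorder_neqE_nat)
  have "(\<sigma> ^^ (x + (y - x))) b = (\<sigma> ^^ x) ((\<sigma> ^^ (y - x)) b)" by (simp only: funpow_add comp_apply)
  then have "(\<sigma> ^^ x) ((\<sigma> ^^ (y - x)) b) = (\<sigma> ^^ x) b"
    using xy unfolding c_def by simp
  then have cyc: "(\<sigma> ^^ (y - x)) b = b" using injf[of x] by (simp add: inj_eq)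
  obtain d where d: "y - x = Suc d" using xy by (cases "y - x") auto
  have "\<sigma> ((\<sigma> ^^ d) b) = \<sigma> a" using cyc d ab(4) by simp
  then have ex: "(\<sigma> ^^ d) b = a" using permutes_inj[OF \<sigma>] by (simp add: inj_eq)
  define p where "p = (LEAST p. (\<sigma> ^^ p) b = a)"
  have pa: "(\<sigma> ^^ p) b = a" unfolding p_def by (rule LeastI[of _ d]) (rule ex)
  have pmin: "(\<sigma> ^^ m) b \<noteq> a" if "m < p" for m using not_less_Least[OF that[unfolded p_def]] .
  have p1: "p \<ge> 1" using pa ab by (cases p) auto
  have inj: "inj_on c {0..p}"
  proof (rule inj_onI, rule ccontr)
    fix u v assume u: "u \<in> {0..p}" and v: "v \<in> {0..p}" and e: "c u = c v" and ne: "u \<noteq> v"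
    have gen: "False" if uv: "u' < v'" "v' \<le> p" "c u' = c v'" for u' v'
    proof -
      have "(\<sigma> ^^ (u' + (v' - u'))) b = (\<sigma> ^^ u') ((\<sigma> ^^ (v' - u')) b)" by (simp only: funpow_add comp_apply)
      then have "(\<sigma> ^^ u') ((\<sigma> ^^ (v' - u')) b) = (\<sigma> ^^ u') b"
        using uv unfolding c_def by simp
      then have cy: "(\<sigma> ^^ (v' - u')) b = b" using injf[of u'] by (simp add: inj_eq)
      have "(\<sigma> ^^ (p - (v' - u'))) b = (\<sigma> ^^ (p - (v' - u'))) ((\<sigma> ^^ (v' - u')) b)" by (simp add: cy)
      also have "\<dots> = (\<sigma> ^^ (p - (v' - u') + (v' - u'))) b" by (simp only: funpow_add comp_apply)
      also have "\<dots> = (\<sigma> ^^ p) b" using uv by simp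
      finally have "(\<sigma> ^^ (p - (v' - u'))) b = a" using pa by simp
      moreover have "p - (v' - u') < p" using uv by simp
      ultimately show False using pmin by blast
    qed
    show False
    proof (cases "u < v")
      case True then show ?thesis using gen[of u v] v e by simp
    next
      case False then show ?thesis using gen[of v u] u e ne by simp
    qed
  qed
  show ?thesis using p1 pa inj pmin unfolding c_def by blast
qed

lemma coeff_signof: "coeff (signof p * (q :: real poly)) k = signof p * coeff q k"
  by (cases "evenperm p") (auto simp: sign_def)

lemma coeff_neg1_pow: "coeff ((-1) ^ m * (q :: real poly)) k = (-1) ^ m * coeff q k"
  by (induction m) auto

lemma off_deg:
  assumes E: "E \<subseteq> {1..n} \<times> {1..n}" and ab: "a < n" "b < n" "a \<noteq> b"
    and kL: "k + shortest_path_length E (Suc a) (Suc b) \<ge> n"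
  shows "coeff (det (mat_delete (dI_minus_A n E Lk \<theta>) a b)) k = 0"
proof -
  define M where "M = dI_minus_A n E Lk \<theta>"
  define M' where "M' = mat n n (\<lambda>(r, c). if r = a then (if c = b then 1 else 0) else M $$ (r, c))"
  have Mc: "M \<in> carrier_mat n n" unfolding M_def by (rule dI_carrier)
  have M'c: "M' \<in> carrier_mat n n" unfolding M'_def by simp
  have "det M' = (\<Sum>c<n. M' $$ (a, c) * cofactor M' a c)"
    by (rule laplace_expansion_row[OF M'c ab(1)])
  also have "\<dots> = (\<Sum>c<n. if c = b then cofactor M' a c else 0)"
    by (rule sum.cong) (auto simp: M'_def ab)
  also have "\<dots> = cofactor M' a b" using ab by simp
  also have "mat_delete M' a b = mat_delete M a b"
    by (rule eq_matI) (use Mc in \<open>auto simp: mat_delete_def M'_def\<close>)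
  then have "cofactor M' a b = (-1) ^ (a + b) * det (mat_delete M a b)" unfolding cofactor_def by simp
  finally have dM': "det M' = (-1) ^ (a + b) * det (mat_delete M a b)" .
  have "(-1) ^ (a + b) * det M' = ((-1) ^ (a + b) * (-1) ^ (a + b)) * det (mat_delete M a b)"
    unfolding dM' by (simp add: mult.assoc)
  also have "(-1::real poly) ^ (a + b) * (-1) ^ (a + b) = 1" by (simp add: power_add[symmetric] flip: power_mult_distrib)
  finally have dd: "det (mat_delete M a b) = (-1) ^ (a + b) * det M'" by simp
  have term0: "coeff (\<Prod>r = 0..<n. M' $$ (r, \<sigma> r)) k = 0" if \<sigma>: "\<sigma> permutes {0..<n}" for \<sigma>
  proof (cases "(\<Prod>r = 0..<n. M' $$ (r, \<sigma> r)) = 0")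
    case True show ?thesis unfolding True by simp
  next
    case False
    then have nz: "M' $$ (r, \<sigma> r) \<noteq> 0" if "r < n" for r using that by auto
    have sr: "\<sigma> r < n" if "r < n" for r using permutes_in_image[OF \<sigma>] that by simp
    have sa: "\<sigma> a = b" using nz[OF ab(1)] sr[OF ab(1)] ab by (auto simp: M'_def split: if_splits)
    have edge: "(Suc (\<sigma> r), Suc r) \<in> E" if r: "r < n" "r \<noteq> a" "\<sigma> r \<noteq> r" for r
    proof (rule ccontr)
      assume ne: "(Suc (\<sigma> r), Suc r) \<notin> E"
      have "M' $$ (r, \<sigma> r) = M $$ (r, \<sigma> r)" using r sr[OF r(1)] by (simp add: M'_def)
      also have "\<dots> = 0" using r sr[OF r(1)] ne
        by (simp add: M_def dI_minus_A_def comp_matrix_def Let_def)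
      finally show False using nz[OF r(1)] by simp
    qed
    obtain p where p: "p \<ge> 1" "(\<sigma> ^^ p) b = a" "inj_on (\<lambda>m. (\<sigma> ^^ m) b) {0..p}"
      "\<forall>m<p. (\<sigma> ^^ m) b \<noteq> a"
      using perm_cycle[OF \<sigma> ab sa] by blast
    define c where "c m = (\<sigma> ^^ m) b" for m
    have cin: "c m < n" for m
    proof (induction m)
      case 0 then show ?case using ab by (simp add: c_def)
    next
      case (Suc m) then show ?case using sr by (simp add: c_def)
    qed
    have csuc: "c (Suc m) = \<sigma> (c m)" for m by (simp add: c_def)
    have cmove: "\<sigma> (c m) \<noteq> c m" if "m < p" for m
    proof
      assume "\<sigma> (c m) = c m"
      then have "c (Suc m) = c m" by (simp add: csuc)
      then show False using p(3) that unfolding c_def[symmetric] by (auto dest: inj_onD)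
    qed
    have path: "(Suc (c m), Suc b) \<in> E ^^ m" if "m \<le> p" for m
      using that
    proof (induction m)
      case 0 then show ?case by (simp add: c_def)
    next
      case (Suc m)
      then have m: "m < p" by simp
      have "(Suc (c (Suc m)), Suc (c m)) \<in> E"
        unfolding csuc by (rule edge) (use cin p(4) m cmove c_def in auto)
      moreover have "(Suc (c m), Suc b) \<in> E ^^ m" using Suc.IH m by simp
      ultimately show ?case by (rule relpow_Suc_I2)
    qed
    have "(Suc a, Suc b) \<in> E ^^ p" using path[of p] p(2) by (simp add: c_def)
    then have Lp: "shortest_path_length E (Suc a) (Suc b) \<le> p"
      unfolding shortest_path_length_def by (rule Least_le)
    have cinj: "inj_on c {0..p}" using p(3) unfolding c_def .
    have csub: "c ` {0..p} \<subseteq> {0..<n}" using cin by auto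
    have "Suc p = card (c ` {0..p})" using card_image[OF cinj] by simp
    also have "\<dots> \<le> n" using card_mono[OF _ csub] by simp
    finally have pn: "Suc p \<le> n" .
    have fixsub: "{r \<in> {0..<n}. r \<noteq> a \<and> \<sigma> r = r} \<subseteq> {0..<n} - c ` {0..p}"
    proof
      fix r assume r: "r \<in> {r \<in> {0..<n}. r \<noteq> a \<and> \<sigma> r = r}"
      have "r \<notin> c ` {0..p}"
      proof
        assume "r \<in> c ` {0..p}"
        then obtain m where m: "m \<le> p" "r = c m" by auto
        show False
        proof (cases "m < p")
          case True then show False using cmove[OF True] m r by simp
        next
          case False then have "m = p" using m by simp
          then show False using m r p(2) by (simp add: c_def)
        qed
      qed
      then show "r \<in> {0..<n} - c ` {0..p}" using r by auto
    qed
    have cardfix: "card {r \<in> {0..<n}. r \<noteq> a \<and> \<sigma> r = r} \<le> n - Suc p"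
    proof -
      have "card {r \<in> {0..<n}. r \<noteq> a \<and> \<sigma> r = r} \<le> card ({0..<n} - c ` {0..p})"
        by (rule card_mono[OF _ fixsub]) simp
      also have "\<dots> = n - Suc p" using card_Diff_subset[OF _ csub] card_image[OF cinj] by simp
      finally show ?thesis .
    qed
    have degr: "degree (M' $$ (r, \<sigma> r)) \<le> (if r \<noteq> a \<and> \<sigma> r = r then 1 else 0)" if r: "r < n" for r
    proof (cases "r = a")
      case True then show ?thesis using r sr[OF r] by (simp add: M'_def)
    next
      case False
      have "M' $$ (r, \<sigma> r) = (if r = \<sigma> r then [:0, 1:] else 0) + [: - comp_matrix n E Lk \<theta> $$ (r, \<sigma> r) :]"
        using r sr[OF r] False by (simp add: M'_def M_def dI_entry)
      moreover have "degree ([:0, 1:] + [: x :]) \<le> 1" for x :: real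
        by (rule order.trans[OF degree_add_le]) auto
      ultimately show ?thesis using False by auto
    qed
    have "degree (\<Prod>r = 0..<n. M' $$ (r, \<sigma> r)) \<le> (\<Sum>r = 0..<n. degree (M' $$ (r, \<sigma> r)))"
      using degree_prod_sum_le[of "{0..<n}" "\<lambda>r. M' $$ (r, \<sigma> r)"] by (simp add: o_def)
    also have "\<dots> \<le> (\<Sum>r = 0..<n. (if r \<noteq> a \<and> \<sigma> r = r then 1 else 0))"
      by (rule sum_mono) (simp add: degr)
    also have "\<dots> = card {r \<in> {0..<n}. r \<noteq> a \<and> \<sigma> r = r}"
      by (simp add: sum.inter_filter[symmetric])
    also have "\<dots> \<le> n - Suc p" by (rule cardfix)
    finally have "degree (\<Prod>r = 0..<n. M' $$ (r, \<sigma> r)) < k" using kL Lp pn by linarith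
    then show ?thesis by (rule coeff_eq_0)
  qed
  have "coeff (det M') k = (\<Sum>\<sigma>\<in>{\<sigma>. \<sigma> permutes {0..<n}}. coeff (signof \<sigma> * (\<Prod>r = 0..<n. M' $$ (r, \<sigma> r))) k)"
    unfolding det_def'[OF M'c] by (simp add: coeff_sum)
  also have "\<dots> = 0" by (rule sum.neutral) (simp add: coeff_signof term0)
  finally have "coeff (det M') k = 0" .
  then show ?thesis unfolding M_def[symmetric] dd coeff_neg1_pow by simp
qed

lemma colsum:
  assumes E: "E \<subseteq> {1..n} \<times> {1..n}" and nl: "\<forall>k. (k, k) \<notin> E" and c: "c < n"
  shows "(\<Sum>i<n. comp_matrix n E {} \<theta> $$ (i, c)) = 0"
proof -
  define g where "g m = \<theta> (EdgeP (Suc c) m)" for m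
  have ent: "comp_matrix n E {} \<theta> $$ (i, c) = (if i = c then - (\<Sum>m\<in>{m. (Suc c, m) \<in> E}. g m)
      else if (Suc c, Suc i) \<in> E then g (Suc i) else 0)" if "i < n" for i
    using that c by (auto simp: comp_matrix_def Let_def g_def)
  have fin: "finite {m. (Suc c, m) \<in> E}"
    by (rule finite_subset[of _ "{1..n}"]) (use E in auto)
  have "(\<Sum>i<n. comp_matrix n E {} \<theta> $$ (i, c)) = comp_matrix n E {} \<theta> $$ (c, c)
      + (\<Sum>i\<in>{..<n} - {c}. comp_matrix n E {} \<theta> $$ (i, c))"
    using c by (subst sum.remove[of _ c]) auto
  also have "(\<Sum>i\<in>{..<n} - {c}. comp_matrix n E {} \<theta> $$ (i, c))
      = (\<Sum>i\<in>{..<n} - {c}. if (Suc c, Suc i) \<in> E then g (Suc i) else 0)"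
    by (rule sum.cong) (auto simp: ent)
  also have "\<dots> = (\<Sum>i\<in>{i \<in> {..<n} - {c}. (Suc c, Suc i) \<in> E}. g (Suc i))"
    by (rule sum.inter_filter[symmetric]) simp
  also have "\<dots> = (\<Sum>m\<in>Suc ` {i \<in> {..<n} - {c}. (Suc c, Suc i) \<in> E}. g m)"
    by (subst sum.reindex) auto
  also have "Suc ` {i \<in> {..<n} - {c}. (Suc c, Suc i) \<in> E} = {m. (Suc c, m) \<in> E}"
  proof (intro equalityI subsetI)
    fix m assume "m \<in> Suc ` {i \<in> {..<n} - {c}. (Suc c, Suc i) \<in> E}"
    then show "m \<in> {m. (Suc c, m) \<in> E}" by auto
  next
    fix m assume "m \<in> {m. (Suc c, m) \<in> E}"
    then have m: "(Suc c, m) \<in> E" by simp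
    then have "m \<in> {1..n}" "m \<noteq> Suc c" using E nl by auto
    then obtain i where "m = Suc i" "i < n" "i \<noteq> c" by (cases m) auto
    then show "m \<in> Suc ` {i \<in> {..<n} - {c}. (Suc c, Suc i) \<in> E}" using m by auto
  qed
  finally show ?thesis using ent[OF c] by simp
qed

lemma noleak0:
  assumes E: "E \<subseteq> {1..n} \<times> {1..n}" and nl: "\<forall>k. (k, k) \<notin> E" and n: "n > 0"
  shows "coeff (det (dI_minus_A n E {} \<theta>)) 0 = 0"
proof -
  define A where "A = comp_matrix n E {} \<theta>"
  have Ac: "A \<in> carrier_mat n n" unfolding A_def by (rule comp_carrier)
  have "coeff (det (dI_minus_A n E {} \<theta>)) 0 = poly (char_poly A) 0"
    unfolding A_def dI_char char_poly_def by (simp add: poly_0_coeff_0)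
  also have "\<dots> = det (- (char_matrix A 0))" by (rule char_poly_matrix[OF Ac])
  also have "char_matrix A 0 = A" by (rule eq_matI) (use Ac in \<open>auto simp: char_matrix_def\<close>)
  also have "det (- A) = 0"
  proof -
    define B where "B = transpose_mat (- A)"
    have Bc: "B \<in> carrier_mat n n" unfolding B_def using Ac by simp
    define v where "v = vec n (\<lambda>_. 1::real)"
    have v: "v \<in> carrier_vec n" "v \<noteq> 0\<^sub>v n"
      unfolding v_def using n by (auto simp: vec_eq_iff)
    have "B *\<^sub>v v = 0\<^sub>v n"
    proof (rule eq_vecI)
      fix c assume "c < dim_vec (0\<^sub>v n :: real vec)"
      then have c: "c < n" by simp
      have "(B *\<^sub>v v) $ c = (\<Sum>i<n. - A $$ (i, c))"
        using c Ac by (simp add: B_def v_def scalar_prod_def atLeast0LessThan)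
      also have "\<dots> = - (\<Sum>i<n. A $$ (i, c))" by (simp add: sum_negf)
      also have "\<dots> = 0" unfolding A_def using colsum[OF E nl c] by simp
      finally show "(B *\<^sub>v v) $ c = 0\<^sub>v n $ c" using c by simp
    qed (use Bc in simp)
    then have "det B = 0" using det_0_iff_vec_prod_zero[OF Bc] v by blast
    then show ?thesis unfolding B_def using det_transpose[of "- A" n] Ac by simp
  qed
  finally show ?thesis .
qed

lemma card_E_ge:
  assumes E: "E \<subseteq> {1..n} \<times> {1..n}" and sc: "strongly_connected n E" and n: "2 \<le> n"
  shows "n \<le> card E"
proof -
  have fE: "finite E" by (rule finite_subset[OF E]) simp
  have out: "\<exists>w. (u, w) \<in> E" if u: "u \<in> {1..n}" for u
  proof -
    define v where "v = (if u = 1 then 2 else 1 :: nat)"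
    have v: "v \<in> {1..n}" "v \<noteq> u" using u n unfolding v_def by auto
    then have "(u, v) \<in> E\<^sup>*" using sc u unfolding strongly_connected_def by blast
    then show ?thesis using v(2) by (cases rule: converse_rtranclE) auto
  qed
  define f where "f u = (u, SOME w. (u, w) \<in> E)" for u
  have "f ` {1..n} \<subseteq> E" unfolding f_def using out by (auto intro: someI_ex)
  moreover have "inj_on f {1..n}" unfolding f_def by (auto simp: inj_on_def)
  ultimately have "card {1..n} \<le> card E" using card_inj_on_le fE by blast
  then show ?thesis by simp
qed

lemma nonconst_sub:
  assumes E: "E \<subseteq> {1..n} \<times> {1..n}" and nl: "\<forall>k. (k, k) \<notin> E"
    and i0: "i0 \<in> {1..n}" and j0: "j0 \<in> {1..n}"
    and idx: "idx \<in> nonconst_indices n E {i0} {j0} Lk"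
  shows "(\<exists>k. idx = (j0, None, k) \<and> k < n \<and> (Lk = {} \<longrightarrow> k \<noteq> 0)) \<or>
         (\<exists>k. idx = (j0, Some i0, k) \<and> (i0 = j0 \<longrightarrow> k < n - 1) \<and>
                (i0 \<noteq> j0 \<longrightarrow> k + shortest_path_length E i0 j0 < n))"
proof -
  have mem: "idx \<in> io_coeff_indices n {i0} {j0}"
    and nc: "\<exists>\<theta>\<in>param_space E Lk. \<exists>\<theta>'\<in>param_space E Lk. io_coeff n E Lk idx \<theta> \<noteq> io_coeff n E Lk idx \<theta>'"
    using idx unfolding nonconst_indices_def by auto
  from mem obtain jo k where id: "idx = (j0, jo, k)" and jo: "jo \<in> {None, Some i0}" and kn: "k \<le> n"
    unfolding io_coeff_indices_def by auto
  have n0: "n > 0" using i0 by auto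
  show ?thesis
  proof (cases jo)
    case None
    have "k < n"
    proof (rule ccontr)
      assume "\<not> k < n" then have "k = n" using kn by simp
      then show False using nc det_dI_coeff(1) unfolding id None io_coeff_def by simp
    qed
    moreover have "Lk = {} \<longrightarrow> k \<noteq> 0"
    proof
      assume Lk: "Lk = {}"
      show "k \<noteq> 0"
      proof
        assume "k = 0"
        then show False using nc noleak0[OF E nl n0] unfolding id None io_coeff_def Lk by simp
      qed
    qed
    ultimately show ?thesis using id None by simp
  next
    case (Some j)
    then have j: "j = i0" using jo by simp
    have io: "io_coeff n E Lk idx \<theta> = (-1) ^ (j0 + i0) * coeff (det (mat_delete (dI_minus_A n E Lk \<theta>) (i0 - 1) (j0 - 1))) k" for \<theta>
      unfolding id Some j io_coeff_def by (simp add: coeff_neg1_pow)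
    have A: "i0 = j0 \<longrightarrow> k < n - 1"
    proof
      assume eq: "i0 = j0"
      show "k < n - 1"
      proof (rule ccontr)
        assume "\<not> k < n - 1"
        then have "coeff (det (mat_delete (dI_minus_A n E Lk \<theta>) (i0 - 1) (i0 - 1))) k = (if k = n - 1 then 1 else 0)" for \<theta>
          using det_del_coeff[where a = "i0 - 1" and n = n and E = E and Lk = Lk and \<theta> = \<theta>] i0 by auto
        then show False using nc unfolding io eq by simp
      qed
    qed
    have B: "i0 \<noteq> j0 \<longrightarrow> k + shortest_path_length E i0 j0 < n"
    proof
      assume ne: "i0 \<noteq> j0"
      show "k + shortest_path_length E i0 j0 < n"
      proof (rule ccontr)
        assume "\<not> k + shortest_path_length E i0 j0 < n"
        then have "n \<le> k + shortest_path_length E (Suc (i0 - 1)) (Suc (j0 - 1))" using i0 j0 by simp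
        then have "coeff (det (mat_delete (dI_minus_A n E Lk \<theta>) (i0 - 1) (j0 - 1))) k = 0" for \<theta>
          by (intro off_deg[OF E]) (use i0 j0 ne in auto)
        then show False using nc unfolding io by simp
      qed
    qed
    show ?thesis using id Some j A B by simp
  qed
qed

lemma card_two:
  assumes sub: "I \<subseteq> f ` K1 \<union> g ` K2" and f1: "finite K1" and f2: "finite K2"
  shows "card I \<le> card K1 + card K2"
proof -
  have "card I \<le> card (f ` K1 \<union> g ` K2)" by (rule card_mono[OF _ sub]) (use f1 f2 in auto)
  also have "\<dots> \<le> card (f ` K1) + card (g ` K2)" by (rule card_Un_le)
  also have "\<dots> \<le> card K1 + card K2" by (intro add_mono card_image_le f1 f2)
  finally show ?thesis .
qed

lemma card_bound:
  fixes n L i0 j0 :: nat and Lk :: "nat set" and I :: "(nat \<times> nat option \<times> nat) set"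
  defines "K1 \<equiv> {k. k < n \<and> (Lk = {} \<longrightarrow> k \<noteq> 0)}"
  defines "K2 \<equiv> {k. (i0 = j0 \<longrightarrow> k < n - 1) \<and> (i0 \<noteq> j0 \<longrightarrow> k + L < n)}"
  assumes sub: "I \<subseteq> (\<lambda>k. (j0, None, k)) ` K1 \<union> (\<lambda>k. (j0, Some i0, k)) ` K2"
  shows "card I \<le> (if Lk = {} then n - 1 else n) + (if i0 = j0 then n - 1 else n - L)"
proof -
  have c1: "card K1 = (if Lk = {} then n - 1 else n)"
  proof (cases "Lk = {}")
    case True
    then have "K1 = {1..<n}" unfolding K1_def by auto
    then show ?thesis using True by simp
  next
    case False
    then have "K1 = {..<n}" unfolding K1_def by auto
    then show ?thesis using False by simp
  qed
  have c2: "card K2 = (if i0 = j0 then n - 1 else n - L)"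
  proof (cases "i0 = j0")
    case True
    then have "K2 = {..<n - 1}" unfolding K2_def by auto
    then show ?thesis using True by simp
  next
    case False
    then have "K2 = {..<n - L}" unfolding K2_def by auto
    then show ?thesis using False by simp
  qed
  have f1: "finite K1" unfolding K1_def by auto
  have f2: "finite K2" by (rule finite_subset[of _ "{..<n}"]) (auto simp: K2_def)
  have "card I \<le> card K1 + card K2" by (rule card_two[OF sub f1 f2])
  then show ?thesis using c1 c2 by simp
qed

lemma restrict_eq_iff: "(restrict F A = restrict G A) \<longleftrightarrow> (\<forall>x\<in>A. F x = G x)"
  by (metis restrict_apply' restrict_ext)

theorem corollary3p5:
  fixes n :: nat and E :: "(nat \<times> nat) set" and Inp Outp Lk :: "nat set"
    and i0 j0 :: nat
  assumes model: "compartmental_model n E Inp Outp Lk"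
    and sc: "strongly_connected n E"
    and inp: "Inp = {i0}" and outp: "Outp = {j0}"
    and cond: "(Lk \<noteq> {} \<and> Inp = Outp \<and> int (card E + card Lk) > 2 * int n - 1)
             \<or> (Lk \<noteq> {} \<and> Inp \<noteq> Outp \<and>
                  int (card E + card Lk) > 2 * int n - int (shortest_path_length E i0 j0))
             \<or> (Lk = {} \<and> Inp = Outp \<and> int (card E) > 2 * int n - 2)
             \<or> (Lk = {} \<and> Inp \<noteq> Outp \<and>
                  int (card E) > 2 * int n - int (shortest_path_length E i0 j0) - 1)"
  shows "unidentifiable n E Inp Outp Lk"
proof -
  have E: "E \<subseteq> {1..n} \<times> {1..n}" and nl: "\<forall>k. (k, k) \<notin> E" and Lsub: "Lk \<subseteq> {1..n}"
    and i0: "i0 \<in> {1..n}" and j0: "j0 \<in> {1..n}"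
    using model inp outp unfolding compartmental_model_def by auto
  have fE: "finite E" by (rule finite_subset[OF E]) simp
  have fL: "finite Lk" by (rule finite_subset[OF Lsub]) simp
  have n1: "n \<ge> 1" using i0 by simp
  define P where "P = param_labels E Lk"
  define I where "I = nonconst_indices n E Inp Outp Lk"
  define L where "L = shortest_path_length E i0 j0"
  have finP: "finite P" unfolding P_def using labels_finite fE fL by blast
  have cardP: "card P = card E + card Lk" unfolding P_def using labels_card fE fL by blast
  have finI: "finite I"
  proof (rule finite_subset)
    show "I \<subseteq> io_coeff_indices n Inp Outp" unfolding I_def nonconst_indices_def by auto
    show "finite (io_coeff_indices n Inp Outp)" unfolding io_coeff_indices_def inp outp by simp
  qed
  have IO: "(Inp = Outp) = (i0 = j0)" using inp outp by auto
  have sub: "I \<subseteq> (\<lambda>k. (j0, None, k)) ` {k. k < n \<and> (Lk = {} \<longrightarrow> k \<noteq> 0)}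
      \<union> (\<lambda>k. (j0, Some i0, k)) ` {k. (i0 = j0 \<longrightarrow> k < n - 1) \<and> (i0 \<noteq> j0 \<longrightarrow> k + L < n)}"
  proof
    fix idx assume "idx \<in> I"
    then have "idx \<in> nonconst_indices n E {i0} {j0} Lk" unfolding I_def inp outp .
    from nonconst_sub[OF E nl i0 j0 this]
    show "idx \<in> (\<lambda>k. (j0, None, k)) ` {k. k < n \<and> (Lk = {} \<longrightarrow> k \<noteq> 0)}
      \<union> (\<lambda>k. (j0, Some i0, k)) ` {k. (i0 = j0 \<longrightarrow> k < n - 1) \<and> (i0 \<noteq> j0 \<longrightarrow> k + L < n)}"
      unfolding L_def by auto
  qed
  have cI: "card I \<le> (if Lk = {} then n - 1 else n) + (if i0 = j0 then n - 1 else n - L)"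
    by (rule card_bound[OF sub])
  have cE: "n \<le> card E" if "i0 \<noteq> j0"
  proof (rule card_E_ge[OF E sc])
    show "2 \<le> n" using i0 j0 that by auto
  qed
  have cL: "card Lk \<ge> 1" if "Lk \<noteq> {}" using that fL by (simp add: Suc_le_eq card_gt_0_iff)
  have main: "card I < card P"
    unfolding cardP
  proof (cases "Lk = {}")
    case True
    show "card I < card E + card Lk"
    proof (cases "i0 = j0")
      case True2: True
      then have "int (card E) > 2 * int n - 2" using cond True IO by auto
      then show ?thesis using cI True True2 n1 by auto
    next
      case False2: False
      then have c: "int (card E) > 2 * int n - int L - 1" using cond True IO unfolding L_def by auto
      show ?thesis
      proof (cases "L \<le> n")
        case True3: True
        then show ?thesis using cI True False2 n1 c by auto
      next
        case False3: False
        then show ?thesis using cI True False2 n1 cE[OF False2] by auto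
      qed
    qed
  next
    case False
    show "card I < card E + card Lk"
    proof (cases "i0 = j0")
      case True2: True
      then have "int (card E + card Lk) > 2 * int n - 1" using cond False IO by auto
      then show ?thesis using cI False True2 n1 by auto
    next
      case False2: False
      then have c: "int (card E + card Lk) > 2 * int n - int L" using cond False IO unfolding L_def by auto
      show ?thesis
      proof (cases "L \<le> n")
        case True3: True
        then show ?thesis using cI False False2 n1 c by auto
      next
        case False3: False
        then show ?thesis using cI False False2 n1 cE[OF False2] cL[OF False] by auto
      qed
    qed
  qed
  have pc: "poly_fun P (io_coeff n E Lk idx)" if "idx \<in> I" for idx
    unfolding P_def using pf_io[OF fE] .
  obtain f where f: "poly_fun P f" "\<exists>\<theta>\<in>PiE P (\<lambda>_. UNIV). f \<theta> \<noteq> 0"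
    "\<forall>\<theta>\<in>PiE P (\<lambda>_. UNIV). f \<theta> \<noteq> 0 \<longrightarrow>
        infinite {\<theta>' \<in> PiE P (\<lambda>_. UNIV). \<forall>i\<in>I. io_coeff n E Lk i \<theta>' = io_coeff n E Lk i \<theta>}"
    using generic_infinite[where c = "\<lambda>i. io_coeff n E Lk i", OF finP finI main pc] by blast
  have ps: "param_space E Lk = PiE P (\<lambda>_. UNIV)" unfolding param_space_def P_def ..
  have fib: "{\<theta>' \<in> param_space E Lk. coeff_map n E Inp Outp Lk \<theta>' = coeff_map n E Inp Outp Lk \<theta>}
      = {\<theta>' \<in> PiE P (\<lambda>_. UNIV). \<forall>i\<in>I. io_coeff n E Lk i \<theta>' = io_coeff n E Lk i \<theta>}" for \<theta>
    unfolding ps coeff_map_def restrict_eq_iff I_def ..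
  show ?thesis
    unfolding unidentifiable_def generically_def fib
    using f unfolding ps P_def[symmetric] by blast
qed

end
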